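(* Let $G$ be an instance of the rank-maximal matchings problem (with last-resort posts added), let $M$ be a rank-maximal matching in $G$, and let $G_M$ be its switching graph. Then: (1) If $p$ is a post unmatched in $M$, then $p\in\mathcal{E}_1\cap\dots\cap\mathcal{E}_{r+1}$, and therefore $p$ is a sink in $G_M$. (2) A post $p$ belongs to a sink component of $G_M$ if and only if $p\in\mathcal{E}_{r+1}$; a post $p$ belongs to a non-sink component if and only if $p\in\mathcal{U}_{r+1}$. (3) Let $T$ be a directed path in $G_M$ from a post $p$ to some sink $q$. Then $w(T)=0$ if and only if $p\in\mathcal{E}_1\cap\dots\cap\mathcal{E}_{r+1}$.
   Context: An instance is a bipartite graph $G=(\mathcal{A}\cup\mathcal{P},E)$, $\mathcal{A}$ applicants, $\mathcal{P}$ posts, $E=E_1\cup\dots\cup E_r$ disjoint; $(a,p)\in E_i$ means $p$ is an $i$-th choice of $a$, $\mathrm{rank}(a,p)=i$ (ties allowed). Each applicant $a$ gets its own dummy last-resort post $\ell(a)$ with $(a,\ell(a))\in E_{r+1}$; the resulting instance is still called $G$. The signature of a matching is $(x_1,\dots,x_{r+1})$, $x_i$ the number of applicants matched along rank-$i$ edges; a matching is rank-maximal if its signature is lexicographically maximum. Even/odd/unreachable: for a bipartite graph and maximum matching $N$, a vertex is even (odd) if an even (odd) length $N$-alternating path leads to it from an $N$-unmatched vertex, unreachable otherwise; independent of $N$. Irving et al.'s algorithm: $G'_1=(\mathcal{A}\cup\mathcal{P},E_1)$, $M_1$ a maximum matching. For $i=1,\dots,r$: let $\mathcal{E}_i,\mathcal{O}_i,\mathcal{U}_i$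 be the even/odd/unreachable vertices of $G'_i$; delete all edges of rank $>i$ incident to $\mathcal{O}_i\cup\mathcal{U}_i$; delete from $G'_i$ the edges joining $\mathcal{O}_i$ to $\mathcal{O}_i\cup\mathcal{U}_i$; add the remaining edges of $E_{i+1}$ to get $G'_{i+1}$; let $M_{i+1}$ be a maximum matching of $G'_{i+1}$ augmenting $M_i$. With $\mathcal{E}_{r+1},\mathcal{O}_{r+1},\mathcal{U}_{r+1}$ the even/odd/unreachable vertices of $G'_{r+1}$, the reduced graph $G'$ is $G'_{r+1}$ minus the edges joining $\mathcal{O}_{r+1}$ to $\mathcal{O}_{r+1}\cup\mathcal{U}_{r+1}$ (independent of choices). Switching graph: for a rank-maximal $M$ (which matches all applicants), $G_M$ is the directed graph on $\mathcal{P}$ with an edge $(p_i,p_j)$ whenever some applicant $a$ has $(a,p_i)\in M$ and $(a,p_j)\in E(G')$, of weight $\mathrm{rank}(a,p_j)-\mathrm{rank}(a,p_i)$; $w(T)$ is the total weight of a path $T$. A sink is a post with no outgoing edge in $G_M$ lying in $\mathcal{E}_1\cap\dots\cap\mathcal{E}_{r+1}$. A sink component is a connected component of the underlying undirected graph of $G_M$ containing at least one sink; other components are non-sink components. *)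

theory Defs
  imports Main
begin

datatype ('a, 'q) vert = Ap 'a | Po 'q

definition adj :: "('a \<times> 'q) set \<Rightarrow> ('a, 'q) vert \<Rightarrow> ('a, 'q) vert \<Rightarrow> bool" where
  "adj F u v \<longleftrightarrow> (\<exists>a q. (a, q) \<in> F \<and> ((u = Ap a \<and> v = Po q) \<or> (u = Po q \<and> v = Ap a)))"

definition is_matching :: "('a \<times> 'q) set \<Rightarrow> ('a \<times> 'q) set \<Rightarrow> bool" where
  "is_matching F N \<longleftrightarrow> N \<subseteq> F \<and>
     (\<forall>a q q'. (a, q) \<in> N \<longrightarrow> (a, q') \<in> N \<longrightarrow> q = q') \<and>
     (\<forall>a a' q. (a, q) \<in> N \<longrightarrow> (a', q) \<in> N \<longrightarrow> a = a')"

definition max_matching :: "('a \<times> 'q) set \<Rightarrow> ('a \<times> 'q) set \<Rightarrow> bool" where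
  "max_matching F N \<longleftrightarrow> is_matching F N \<and> (\<forall>N'. is_matching F N' \<longrightarrow> card N' \<le> card N)"

definition covered :: "('a \<times> 'q) set \<Rightarrow> ('a, 'q) vert \<Rightarrow> bool" where
  "covered N v \<longleftrightarrow> (\<exists>u. adj N v u)"

definition alt_path :: "('a \<times> 'q) set \<Rightarrow> ('a \<times> 'q) set \<Rightarrow> ('a, 'q) vert list \<Rightarrow> bool" where
  "alt_path F N xs \<longleftrightarrow> xs \<noteq> [] \<and> distinct xs \<and> \<not> covered N (hd xs) \<and>
     (\<forall>i. Suc i < length xs \<longrightarrow>
        adj F (xs ! i) (xs ! Suc i) \<and> (adj N (xs ! i) (xs ! Suc i) \<longleftrightarrow> odd i))"

text \<open>Even / odd / unreachable vertices of the graph (V, F), defined w.r.t. a maximum matching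
  (the notion is independent of the chosen maximum matching).\<close>

definition even_vs :: "('a, 'q) vert set \<Rightarrow> ('a \<times> 'q) set \<Rightarrow> ('a, 'q) vert set" where
  "even_vs V F = {v \<in> V. \<exists>N. max_matching F N \<and>
      (\<exists>xs. alt_path F N xs \<and> last xs = v \<and> even (length xs - 1))}"

definition odd_vs :: "('a, 'q) vert set \<Rightarrow> ('a \<times> 'q) set \<Rightarrow> ('a, 'q) vert set" where
  "odd_vs V F = {v \<in> V. \<exists>N. max_matching F N \<and>
      (\<exists>xs. alt_path F N xs \<and> last xs = v \<and> odd (length xs - 1))}"

definition unr_vs :: "('a, 'q) vert set \<Rightarrow> ('a \<times> 'q) set \<Rightarrow> ('a, 'q) vert set" where
  "unr_vs V F = V - even_vs V F - odd_vs V F"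

definition incident :: "('a \<times> 'q) \<Rightarrow> ('a, 'q) vert set \<Rightarrow> bool" where
  "incident e S \<longleftrightarrow> Ap (fst e) \<in> S \<or> Po (snd e) \<in> S"

definition joins_OU :: "('a \<times> 'q) \<Rightarrow> ('a, 'q) vert set \<Rightarrow> ('a, 'q) vert set \<Rightarrow> bool" where
  "joins_OU e Od Ur \<longleftrightarrow> (Ap (fst e) \<in> Od \<and> Po (snd e) \<in> Od \<union> Ur) \<or> (Po (snd e) \<in> Od \<and> Ap (fst e) \<in> Od \<union> Ur)"

text \<open>irv V EE rk k = (edge set of G'_(k+1), edges of rank > k+1 of the instance that have
  not yet been deleted).\<close>

fun irv :: "('a, 'q) vert set \<Rightarrow> ('a \<times> 'q) set \<Rightarrow> ('a \<Rightarrow> 'q \<Rightarrow> nat) \<Rightarrow> nat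
            \<Rightarrow> ('a \<times> 'q) set \<times> ('a \<times> 'q) set" where
  "irv V EE rk 0 = ({e \<in> EE. case_prod rk e = 1}, {e \<in> EE. case_prod rk e > 1})"
| "irv V EE rk (Suc k) =
     (let G = fst (irv V EE rk k); R = snd (irv V EE rk k); i = Suc k;
          Od = odd_vs V G; Ur = unr_vs V G;
          R' = {e \<in> R. \<not> incident e (Od \<union> Ur)}
      in ((G - {e. joins_OU e Od Ur}) \<union> {e \<in> R'. case_prod rk e = Suc i},
          {e \<in> R'. case_prod rk e > Suc i}))"

text \<open>Posts of the extended instance have type 'p + 'a: Inl p is an original post,
  Inr a is the last-resort post l(a) of applicant a, with rank r+1.\<close>

definition rm_instance :: "'a set \<Rightarrow> 'p set \<Rightarrow> ('a \<times> 'p) set \<Rightarrow> ('a \<Rightarrow> 'p \<Rightarrow> nat) \<Rightarrow> nat \<Rightarrow> bool" where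
  "rm_instance A P E rank r \<longleftrightarrow> finite A \<and> finite P \<and> E \<subseteq> A \<times> P \<and>
     (\<forall>(a, p) \<in> E. 1 \<le> rank a p \<and> rank a p \<le> r)"

definition posts :: "'a set \<Rightarrow> 'p set \<Rightarrow> ('p + 'a) set" where
  "posts A P = Inl ` P \<union> Inr ` A"

definition verts :: "'a set \<Rightarrow> 'p set \<Rightarrow> ('a, 'p + 'a) vert set" where
  "verts A P = Ap ` A \<union> Po ` posts A P"

definition xedges :: "'a set \<Rightarrow> ('a \<times> 'p) set \<Rightarrow> ('a \<times> ('p + 'a)) set" where
  "xedges A E = {(a, Inl p) | a p. (a, p) \<in> E} \<union> {(a, Inr a) | a. a \<in> A}"

definition xrank :: "('a \<Rightarrow> 'p \<Rightarrow> nat) \<Rightarrow> nat \<Rightarrow> 'a \<Rightarrow> ('p + 'a) \<Rightarrow> nat" where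
  "xrank rank r a q = (case q of Inl p \<Rightarrow> rank a p | Inr _ \<Rightarrow> r + 1)"

definition Gp :: "'a set \<Rightarrow> 'p set \<Rightarrow> ('a \<times> 'p) set \<Rightarrow> ('a \<Rightarrow> 'p \<Rightarrow> nat) \<Rightarrow> nat \<Rightarrow> nat
                 \<Rightarrow> ('a \<times> ('p + 'a)) set" where
  "Gp A P E rank r i = fst (irv (verts A P) (xedges A E) (xrank rank r) (i - 1))"

definition Ecl where "Ecl A P E rank r i = even_vs (verts A P) (Gp A P E rank r i)"
definition Ocl where "Ocl A P E rank r i = odd_vs (verts A P) (Gp A P E rank r i)"
definition Ucl where "Ucl A P E rank r i = unr_vs (verts A P) (Gp A P E rank r i)"

definition reduced :: "'a set \<Rightarrow> 'p set \<Rightarrow> ('a \<times> 'p) set \<Rightarrow> ('a \<Rightarrow> 'p \<Rightarrow> nat) \<Rightarrow> nat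
                 \<Rightarrow> ('a \<times> ('p + 'a)) set" where
  "reduced A P E rank r = Gp A P E rank r (r + 1) -
     {e. joins_OU e (Ocl A P E rank r (r + 1)) (Ucl A P E rank r (r + 1))}"

definition signature :: "('a \<Rightarrow> 'p \<Rightarrow> nat) \<Rightarrow> nat \<Rightarrow> ('a \<times> ('p + 'a)) set \<Rightarrow> nat list" where
  "signature rank r M = map (\<lambda>i. card {e \<in> M. case_prod (xrank rank r) e = i}) [1..<r + 2]"

definition rank_maximal :: "'a set \<Rightarrow> ('a \<times> 'p) set \<Rightarrow> ('a \<Rightarrow> 'p \<Rightarrow> nat) \<Rightarrow> nat
                 \<Rightarrow> ('a \<times> ('p + 'a)) set \<Rightarrow> bool" where
  "rank_maximal A E rank r M \<longleftrightarrow> is_matching (xedges A E) M \<and>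
     \<not> (\<exists>M'. is_matching (xedges A E) M' \<and>
            (signature rank r M, signature rank r M') \<in> lexord {(x, y). x < y})"

definition sw_edge :: "('a \<times> 'q) set \<Rightarrow> ('a \<times> 'q) set \<Rightarrow> 'q \<Rightarrow> 'q \<Rightarrow> bool" where
  "sw_edge G' M p p' \<longleftrightarrow> p \<noteq> p' \<and> (\<exists>a. (a, p) \<in> M \<and> (a, p') \<in> G')"

definition sw_weight :: "('a \<Rightarrow> 'q \<Rightarrow> nat) \<Rightarrow> ('a \<times> 'q) set \<Rightarrow> 'q \<Rightarrow> 'q \<Rightarrow> int" where
  "sw_weight rk M p p' = (let a = (THE a. (a, p) \<in> M) in int (rk a p') - int (rk a p))"

definition path_weight :: "('a \<Rightarrow> 'q \<Rightarrow> nat) \<Rightarrow> ('a \<times> 'q) set \<Rightarrow> 'q list \<Rightarrow> int" where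
  "path_weight rk M T = (\<Sum>i < length T - 1. sw_weight rk M (T ! i) (T ! Suc i))"

definition dpath :: "'q set \<Rightarrow> ('a \<times> 'q) set \<Rightarrow> ('a \<times> 'q) set \<Rightarrow> 'q list \<Rightarrow> bool" where
  "dpath Q G' M T \<longleftrightarrow> T \<noteq> [] \<and> distinct T \<and> set T \<subseteq> Q \<and>
     (\<forall>i. Suc i < length T \<longrightarrow> sw_edge G' M (T ! i) (T ! Suc i))"

definition is_sink :: "'a set \<Rightarrow> 'p set \<Rightarrow> ('a \<times> 'p) set \<Rightarrow> ('a \<Rightarrow> 'p \<Rightarrow> nat) \<Rightarrow> nat
                 \<Rightarrow> ('a \<times> ('p + 'a)) set \<Rightarrow> ('p + 'a) \<Rightarrow> bool" where
  "is_sink A P E rank r M q \<longleftrightarrow> q \<in> posts A P \<and>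
     \<not> (\<exists>q'. sw_edge (reduced A P E rank r) M q q') \<and>
     (\<forall>i \<in> {1..r + 1}. Po q \<in> Ecl A P E rank r i)"

definition undirected_rel :: "'a set \<Rightarrow> 'p set \<Rightarrow> ('a \<times> 'p) set \<Rightarrow> ('a \<Rightarrow> 'p \<Rightarrow> nat) \<Rightarrow> nat
                 \<Rightarrow> ('a \<times> ('p + 'a)) set \<Rightarrow> (('p + 'a) \<times> ('p + 'a)) set" where
  "undirected_rel A P E rank r M =
     {(x, y). sw_edge (reduced A P E rank r) M x y \<or> sw_edge (reduced A P E rank r) M y x}"

definition in_sink_comp where
  "in_sink_comp A P E rank r M p \<longleftrightarrow> p \<in> posts A P \<and>
     (\<exists>s. is_sink A P E rank r M s \<and> (p, s) \<in> (undirected_rel A P E rank r M)\<^sup>*)"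

definition in_nonsink_comp where
  "in_nonsink_comp A P E rank r M p \<longleftrightarrow> p \<in> posts A P \<and>
     \<not> (\<exists>s. is_sink A P E rank r M s \<and> (p, s) \<in> (undirected_rel A P E rank r M)\<^sup>*)"

end

theory Submission
  imports Defs
begin


fun isA :: "('a,'q) vert \<Rightarrow> bool" where
  "isA (Ap _) = True" | "isA (Po _) = False"

fun ep :: "('a,'q) vert \<Rightarrow> ('a,'q) vert \<Rightarrow> 'a \<times> 'q" where
  "ep (Ap a) (Po q) = (a,q)" | "ep (Po q) (Ap a) = (a,q)" | "ep _ _ = undefined"

definition inc :: "'a \<times> 'q \<Rightarrow> ('a,'q) vert \<Rightarrow> bool" where
  "inc e v \<longleftrightarrow> v = Ap (fst e) \<or> v = Po (snd e)"

lemma adj_sym: "adj F u v \<Longrightarrow> adj F v u"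
  by (auto simp: adj_def)
lemma adj_mono: "F \<subseteq> G \<Longrightarrow> adj F u v \<Longrightarrow> adj G u v"
  by (auto simp: adj_def)
lemma adj_neq: "adj F u v \<Longrightarrow> u \<noteq> v"
  by (auto simp: adj_def)
lemma adj_side: "adj F u v \<Longrightarrow> isA u \<longleftrightarrow> \<not> isA v"
  by (auto simp: adj_def)
lemma adj_ep: "adj X u v \<longleftrightarrow> adj UNIV u v \<and> ep u v \<in> X"
  by (auto simp: adj_def)
lemma ep_sym: "adj UNIV u v \<Longrightarrow> ep u v = ep v u"
  by (auto simp: adj_def)
lemma inc_ep: "adj UNIV u w \<Longrightarrow> inc (ep u w) v \<longleftrightarrow> v = u \<or> v = w"
  by (auto simp: adj_def inc_def)
lemma match_share: "is_matching F N \<Longrightarrow> adj N u v \<Longrightarrow> adj N v w \<Longrightarrow> u = w"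
  unfolding is_matching_def adj_def by blast
lemma covered_iff: "covered N v \<longleftrightarrow> (\<exists>e\<in>N. inc e v)"
  by (cases v) (force simp: covered_def adj_def inc_def)+
lemma is_matching_alt: "is_matching F N \<longleftrightarrow> N \<subseteq> F \<and>
   (\<forall>e\<in>N. \<forall>e'\<in>N. \<forall>v. inc e v \<longrightarrow> inc e' v \<longrightarrow> e = e')"
proof
  assume m: "is_matching F N"
  show "N \<subseteq> F \<and> (\<forall>e\<in>N. \<forall>e'\<in>N. \<forall>v. inc e v \<longrightarrow> inc e' v \<longrightarrow> e = e')"
  proof (intro conjI ballI allI impI)
    show "N \<subseteq> F" using m by (simp add: is_matching_def)
  next
    fix e e' v assume "e \<in> N" "e' \<in> N" "inc e v" "inc e' v"
    then show "e = e'" using m unfolding is_matching_def inc_def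
      by (cases e; cases e'; auto)
  qed
next
  assume h: "N \<subseteq> F \<and> (\<forall>e\<in>N. \<forall>e'\<in>N. \<forall>v. inc e v \<longrightarrow> inc e' v \<longrightarrow> e = e')"
  show "is_matching F N" unfolding is_matching_def
  proof (intro conjI allI impI)
    show "N \<subseteq> F" using h by simp
  next
    fix a q q' assume "(a,q) \<in> N" "(a,q') \<in> N"
    then show "q = q'" using h[THEN conjunct2, rule_format, of "(a,q)" "(a,q')" "Ap a"] by (simp add: inc_def)
  next
    fix a a' q assume "(a,q) \<in> N" "(a',q) \<in> N"
    then show "a = a'" using h[THEN conjunct2, rule_format, of "(a,q)" "(a',q)" "Po q"] by (simp add: inc_def)
  qed
qed
lemma match_inc_eq: "is_matching F N \<Longrightarrow> e \<in> N \<Longrightarrow> e' \<in> N \<Longrightarrow> inc e v \<Longrightarrow> inc e' v \<Longrightarrow> e = e'"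
  using is_matching_alt by metis

lemma parity:
  assumes "\<forall>i. Suc i < length xs \<longrightarrow> adj F (xs!i) (xs!Suc i)"
  shows "i < length xs \<Longrightarrow> isA (xs!i) = (isA (xs!0) = even i)"
proof (induction i)
  case 0 then show ?case by simp
next
  case (Suc i)
  then have "adj F (xs!i) (xs!Suc i)" using assms by auto
  then show ?case using Suc adj_side by fastforce
qed

definition altp :: "('a\<times>'q) set \<Rightarrow> ('a\<times>'q) set \<Rightarrow> ('a\<times>'q) set \<Rightarrow> ('a,'q) vert list \<Rightarrow> bool" where
  "altp F X1 X2 xs \<longleftrightarrow> xs \<noteq> [] \<and> distinct xs \<and> (\<forall>i. Suc i < length xs \<longrightarrow>
     adj F (xs!i) (xs!Suc i) \<and> (even i \<longrightarrow> adj X1 (xs!i) (xs!Suc i)) \<and> (odd i \<longrightarrow> adj X2 (xs!i) (xs!Suc i)))"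

lemma distinct_idx: "distinct xs \<Longrightarrow> i < length xs \<Longrightarrow> j < length xs \<Longrightarrow> xs!i = xs!j \<Longrightarrow> i = j"
  using nth_eq_iff_index_eq by blast

lemma notin_odd:
  assumes "is_matching F1 X1" "altp F X1 X2 xs" "odd i" "Suc i < length xs"
  shows "\<not> adj X1 (xs!i) (xs!Suc i)"
proof
  assume a: "adj X1 (xs!i) (xs!Suc i)"
  have i1: "Suc (i-1) = i" "even (i-1)" using assms(3) by (cases i; simp)+
  have "Suc (i-1) < length xs" using i1 assms(4) by simp
  then have "adj X1 (xs!(i-1)) (xs!Suc (i-1))" using assms(2) i1(2) unfolding altp_def by blast
  then have "adj X1 (xs!(i-1)) (xs!i)" using i1 by simp
  then have "xs!(i-1) = xs!Suc i" using match_share[OF assms(1)] a by blast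
  then have "i - 1 = Suc i" using assms(2,4) distinct_idx[of xs "i-1" "Suc i"] unfolding altp_def by auto
  then show False by simp
qed

lemma notin_even:
  assumes "is_matching F2 X2" "altp F X1 X2 xs" "\<not> covered X2 (hd xs)" "even i" "Suc i < length xs"
  shows "\<not> adj X2 (xs!i) (xs!Suc i)"
proof
  assume a: "adj X2 (xs!i) (xs!Suc i)"
  show False
  proof (cases i)
    case 0
    then have "covered X2 (xs!0)" using a by (auto simp: covered_def)
    then show False using assms(2,3) by (simp add: altp_def hd_conv_nth)
  next
    case (Suc j)
    then have "odd j" using assms(4) by simp
    then have "adj X2 (xs!j) (xs!i)" using assms(2,5) Suc unfolding altp_def by auto
    then have "xs!j = xs!Suc i" using match_share[OF assms(1)] a by blast
    then have "j = Suc i" using assms(2,5) distinct_idx[of xs j "Suc i"] Suc unfolding altp_def by auto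
    then show False using Suc by simp
  qed
qed

lemma alt_path_altp:
  assumes "alt_path F N xs"
  shows "altp F F N xs" "\<not> covered N (hd xs)"
    "\<And>i. Suc i < length xs \<Longrightarrow> adj N (xs!i) (xs!Suc i) \<longleftrightarrow> odd i"
  using assms unfolding alt_path_def altp_def by auto

lemma altp_alt_path:
  assumes "altp F X1 N xs" "is_matching F' N" "\<not> covered N (hd xs)"
  shows "alt_path F N xs"
  unfolding alt_path_def
proof (intro conjI allI impI)
  show "xs \<noteq> []" "distinct xs" "\<not> covered N (hd xs)" using assms unfolding altp_def by auto
next
  fix i assume i: "Suc i < length xs"
  show "adj F (xs ! i) (xs ! Suc i)" using assms(1) i unfolding altp_def by auto
  show "adj N (xs ! i) (xs ! Suc i) = odd i"
    using notin_even[OF assms(2,1,3) _ i] assms(1) i unfolding altp_def by auto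
qed

lemma altp_mono: "altp F X1 X2 xs \<Longrightarrow> F \<subseteq> F' \<Longrightarrow> X1 \<subseteq> Y1 \<Longrightarrow> X2 \<subseteq> Y2 \<Longrightarrow> altp F' Y1 Y2 xs"
  unfolding altp_def using adj_mono by metis

lemma alt_path_take:
  assumes "alt_path F N xs" "0 < n" "n \<le> length xs"
  shows "alt_path F N (take n xs)" "last (take n xs) = xs!(n-1)" "hd (take n xs) = hd xs"
proof -
  show "alt_path F N (take n xs)" using assms unfolding alt_path_def
    by (auto simp: distinct_take)
  show "last (take n xs) = xs!(n-1)" using assms
    by (subst last_conv_nth) (auto simp: min_def alt_path_def)
  show "hd (take n xs) = hd xs" using assms by (simp add: hd_conv_nth)
qed

lemma altp_rev:
  assumes "altp F X1 X2 xs" "even (length xs - 1)"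
  shows "altp F X2 X1 (rev xs)"
proof -
  have H: "adj F (rev xs ! i) (rev xs ! Suc i) \<and> (even i \<longrightarrow> adj X2 (rev xs ! i) (rev xs ! Suc i))
     \<and> (odd i \<longrightarrow> adj X1 (rev xs ! i) (rev xs ! Suc i))" if i: "Suc i < length (rev xs)" for i
  proof -
    define n where "n = length xs"
    define j where "j = n - Suc (Suc i)"
    have j: "Suc j < n" "n - Suc i = Suc j" using i by (auto simp: j_def n_def)
    have r1: "rev xs ! i = xs ! Suc j" using i j by (simp add: rev_nth n_def)
    have r2: "rev xs ! Suc i = xs ! j" using i j by (simp add: rev_nth n_def j_def)
    have "even (n - 1)" "Suc i < n" using assms(2) i unfolding n_def by auto
    then have par: "even i \<longleftrightarrow> odd j" unfolding j_def by presburger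
    have h: "adj F (xs!j) (xs!Suc j) \<and> (even j \<longrightarrow> adj X1 (xs!j) (xs!Suc j)) \<and> (odd j \<longrightarrow> adj X2 (xs!j) (xs!Suc j))"
      using assms(1) j unfolding altp_def n_def by blast
    show ?thesis using h r1 r2 adj_sym par by metis
  qed
  show ?thesis using H assms(1) unfolding altp_def by auto
qed

definition pe :: "('a,'q) vert list \<Rightarrow> nat \<Rightarrow> 'a \<times> 'q" where
  "pe xs i = ep (xs!i) (xs!Suc i)"

definition swp :: "('a\<times>'q) set \<Rightarrow> ('a,'q) vert list \<Rightarrow> ('a\<times>'q) set" where
  "swp N xs = (N - {pe xs i |i. Suc i < length xs \<and> odd i}) \<union> {pe xs i |i. Suc i < length xs \<and> even i}"

lemma card_odd_lt: "card {i. i < k \<and> odd i} = k div 2"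
proof (induction k)
  case 0 then show ?case by simp
next
  case (Suc k)
  show ?case
  proof (cases "odd k")
    case True
    then have "{i. i < Suc k \<and> odd i} = insert k {i. i < k \<and> odd i}" by (auto simp: less_Suc_eq)
    then have "card {i. i < Suc k \<and> odd i} = Suc (k div 2)" using Suc by simp
    moreover have "Suc (k div 2) = Suc k div 2" using True by presburger
    ultimately show ?thesis by simp
  next
    case False
    then have "{i. i < Suc k \<and> odd i} = {i. i < k \<and> odd i}" by (auto simp: less_Suc_eq)
    moreover have "k div 2 = Suc k div 2" using False by presburger
    ultimately show ?thesis using Suc by simp
  qed
qed

lemma card_even_lt: "card {i. i < k \<and> even i} = k - k div 2"
proof -
  have "{i. i < k} = {i. i < k \<and> even i} \<union> {i. i < k \<and> odd i}" by auto
  moreover have "{i. i < k \<and> even i} \<inter> {i. i < k \<and> odd i} = {}" by auto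
  moreover have "finite {i. i < k \<and> even i}" "finite {i. i < k \<and> odd i}" by auto
  ultimately have "card {i. i < k} = card {i. i < k \<and> even i} + card {i. i < k \<and> odd i}"
    using card_Un_disjoint by metis
  then have "k = card {i. i < k \<and> even i} + card {i. i < k \<and> odd i}" by simp
  then show ?thesis using card_odd_lt by simp
qed

lemma pe_inc:
  assumes "adj F (xs!i) (xs!Suc i)"
  shows "inc (pe xs i) v \<longleftrightarrow> v = xs!i \<or> v = xs!Suc i"
  using inc_ep[OF adj_mono[OF _ assms]] unfolding pe_def by blast

lemma pe_inj:
  assumes "distinct xs" "Suc i < length xs" "Suc j < length xs"
    "adj F (xs!i) (xs!Suc i)" "adj F (xs!j) (xs!Suc j)" "pe xs i = pe xs j"
  shows "i = j"
proof -
  have a: "xs!i = xs!j \<or> xs!i = xs!Suc j" using pe_inc[OF assms(4), of "xs!i"] pe_inc[OF assms(5), of "xs!i"] assms(6) by auto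
  have b: "xs!Suc i = xs!j \<or> xs!Suc i = xs!Suc j" using pe_inc[OF assms(4), of "xs!Suc i"] pe_inc[OF assms(5), of "xs!Suc i"] assms(6) by auto
  have l: "i < length xs" "j < length xs" using assms(2,3) by auto
  have a': "i = j \<or> i = Suc j" using a distinct_idx[OF assms(1)] l assms(2,3) by blast
  have b': "Suc i = j \<or> Suc i = Suc j" using b distinct_idx[OF assms(1)] l assms(2,3) by blast
  show ?thesis using a' b' by auto
qed

lemma swp_props:
  assumes m: "is_matching F N" and fN: "finite N" and ap: "alt_path F N xs"
    and lst: "odd (length xs - 1) \<longrightarrow> \<not> covered N (last xs)"
  shows "is_matching F (swp N xs)"
    "card (swp N xs) = card N + (length xs - 1) mod 2"
    "even (length xs - 1) \<Longrightarrow> \<not> covered (swp N xs) (last xs)"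
    "odd (length xs - 1) \<Longrightarrow> covered N v \<Longrightarrow> covered (swp N xs) v"
    "\<And>i. Suc i < length xs \<Longrightarrow> even i \<Longrightarrow> pe xs i \<in> swp N xs"
    "\<And>e. e \<in> N \<Longrightarrow> e \<notin> swp N xs \<Longrightarrow> \<exists>i. Suc i < length xs \<and> odd i \<and> e = pe xs i"
proof -
  define n where "n = length xs"
  define Od where "Od = {pe xs i |i. Suc i < length xs \<and> odd i}"
  define Ev where "Ev = {pe xs i |i. Suc i < length xs \<and> even i}"
  have sw: "swp N xs = (N - Od) \<union> Ev" unfolding swp_def Od_def Ev_def by simp
  have ne: "xs \<noteq> []" and dist: "distinct xs" using ap by (auto simp: alt_path_def)
  have n1: "n \<ge> 1" using ne by (simp add: n_def Suc_le_eq)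
  have AD: "\<And>i. Suc i < n \<Longrightarrow> adj F (xs!i) (xs!Suc i)" using ap by (auto simp: alt_path_def n_def)
  have AN: "\<And>i. Suc i < n \<Longrightarrow> adj N (xs!i) (xs!Suc i) \<longleftrightarrow> odd i" using ap by (auto simp: alt_path_def n_def)
  have hdu: "\<not> covered N (xs!0)" using ap ne by (auto simp: alt_path_def hd_conv_nth)
  have lastx: "last xs = xs!(n-1)" using ne by (simp add: last_conv_nth n_def)
  have PN: "\<And>i. Suc i < n \<Longrightarrow> odd i \<Longrightarrow> pe xs i \<in> N"
    using AN AD adj_ep unfolding pe_def by metis
  have PNn: "\<And>i. Suc i < n \<Longrightarrow> even i \<Longrightarrow> pe xs i \<notin> N"
    using AN AD adj_ep adj_mono unfolding pe_def by (metis subset_UNIV)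
  have PF: "\<And>i. Suc i < n \<Longrightarrow> pe xs i \<in> F"
    using AD adj_ep unfolding pe_def by metis
  have KEY: "\<exists>i. Suc i < n \<and> odd i \<and> e = pe xs i" if e: "e \<in> N" "m < n" "inc e (xs!m)" for e m
  proof (cases "odd m")
    case True
    show ?thesis
    proof (cases "Suc m < n")
      case True
      have "inc (pe xs m) (xs!m)" using pe_inc[OF AD[OF True]] by simp
      then have "e = pe xs m" using match_inc_eq[OF m e(1) PN[OF True \<open>odd m\<close>]] e(3) by blast
      then show ?thesis using True \<open>odd m\<close> by blast
    next
      case False
      then have "m = n - 1" using e(2) by simp
      then have "covered N (last xs)" using e covered_iff lastx by metis
      then show ?thesis using lst \<open>odd m\<close> \<open>m = n-1\<close> n_def by simp
    qed
  next
    case False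
    show ?thesis
    proof (cases m)
      case 0
      then show ?thesis using hdu e covered_iff by metis
    next
      case (Suc j)
      then have j: "Suc j < n" "odd j" using e(2) False by auto
      have "inc (pe xs j) (xs!m)" using pe_inc[OF AD[OF j(1)]] Suc by simp
      then have "e = pe xs j" using match_inc_eq[OF m e(1) PN[OF j]] e(3) by blast
      then show ?thesis using j by blast
    qed
  qed
  show M: "is_matching F (swp N xs)" unfolding is_matching_alt
  proof (intro conjI ballI allI impI)
    show "swp N xs \<subseteq> F" using m PF unfolding sw Ev_def is_matching_def n_def by auto
  next
    fix e e' v assume ee: "e \<in> swp N xs" "e' \<in> swp N xs" "inc e v" "inc e' v"
    have c1: False if c: "e \<in> N - Od" "e' \<in> Ev" "inc e v" "inc e' v" for e e'
    proof -
      obtain j where j: "Suc j < n" "even j" "e' = pe xs j" using c(2) unfolding Ev_def n_def by auto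
      have "v = xs!j \<or> v = xs!Suc j" using c(4) j pe_inc[OF AD[OF j(1)]] by simp
      then obtain m where "m < n" "v = xs!m" using j(1) by (metis Suc_lessD)
      then obtain i where "Suc i < n" "odd i" "e = pe xs i" using KEY c(1,3) by blast
      then show False using c(1) unfolding Od_def n_def by auto
    qed
    show "e = e'"
    proof (cases "e \<in> Ev")
      case True
      show ?thesis
      proof (cases "e' \<in> Ev")
        case True
        obtain i where i: "Suc i < n" "even i" "e = pe xs i" using \<open>e \<in> Ev\<close> unfolding Ev_def n_def by auto
        obtain j where j: "Suc j < n" "even j" "e' = pe xs j" using True unfolding Ev_def n_def by auto
        have vi: "v = xs!i \<or> v = xs!Suc i" using ee(3) i pe_inc[OF AD[OF i(1)]] by simp
        have vj: "v = xs!j \<or> v = xs!Suc j" using ee(4) j pe_inc[OF AD[OF j(1)]] by simp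
        have "i = j \<or> i = Suc j \<or> Suc i = j \<or> Suc i = Suc j"
          using vi vj distinct_idx[OF dist] i(1) j(1) unfolding n_def by (metis Suc_lessD)
        then have "i = j" using i(2) j(2) by auto
        then show ?thesis using i j by simp
      next
        case False
        then have "e' \<in> N - Od" using ee(2) sw by auto
        then show ?thesis using c1[OF _ \<open>e \<in> Ev\<close> ee(4,3)] by blast
      qed
    next
      case False
      then have eN: "e \<in> N - Od" using ee(1) sw by auto
      show ?thesis
      proof (cases "e' \<in> Ev")
        case True
        then show ?thesis using c1[OF eN True ee(3,4)] by blast
      next
        case False
        then have "e' \<in> N" using ee(2) sw by auto
        then show ?thesis using match_inc_eq[OF m _ _ ee(3,4)] eN by blast
      qed
    qed
  qed
  define k where "k = n - 1"
  have io: "{i. Suc i < n \<and> odd i} = {i. i < k \<and> odd i}" unfolding k_def by auto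
  have ie: "{i. Suc i < n \<and> even i} = {i. i < k \<and> even i}" unfolding k_def by auto
  have injp: "inj_on (pe xs) {i. Suc i < n}"
    using pe_inj[OF dist] AD unfolding inj_on_def n_def by blast
  have cOd: "card Od = k div 2"
  proof -
    have "Od = pe xs ` {i. Suc i < n \<and> odd i}" unfolding Od_def n_def by auto
    moreover have "inj_on (pe xs) {i. Suc i < n \<and> odd i}" using injp by (rule inj_on_subset) auto
    ultimately show ?thesis using card_image io card_odd_lt by metis
  qed
  have cEv: "card Ev = k - k div 2"
  proof -
    have "Ev = pe xs ` {i. Suc i < n \<and> even i}" unfolding Ev_def n_def by auto
    moreover have "inj_on (pe xs) {i. Suc i < n \<and> even i}" using injp by (rule inj_on_subset) auto
    ultimately show ?thesis using card_image ie card_even_lt by metis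
  qed
  have OdN: "Od \<subseteq> N" using PN unfolding Od_def n_def by auto
  have EvN: "Ev \<inter> N = {}" using PNn unfolding Ev_def n_def by auto
  have fEv: "finite Ev" unfolding Ev_def
    by (rule finite_subset[of _ "pe xs ` {i. i < length xs}"]) auto
  have "card (swp N xs) = card (N - Od) + card Ev"
    unfolding sw using EvN fN fEv by (subst card_Un_disjoint) auto
  also have "\<dots> = card N - k div 2 + (k - k div 2)"
    using OdN fN cOd cEv by (simp add: card_Diff_subset finite_subset)
  also have "\<dots> = card N + k mod 2"
  proof -
    have "k div 2 \<le> card N" using OdN fN cOd card_mono by metis
    then show ?thesis by presburger
  qed
  finally show "card (swp N xs) = card N + (length xs - 1) mod 2" unfolding k_def n_def .
  show "\<not> covered (swp N xs) (last xs)" if ev: "even (length xs - 1)"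
  proof
    assume "covered (swp N xs) (last xs)"
    then obtain e where e: "e \<in> swp N xs" "inc e (xs!(n-1))" using covered_iff lastx by metis
    show False
    proof (cases "e \<in> Ev")
      case True
      then obtain i where i: "Suc i < n" "even i" "e = pe xs i" unfolding Ev_def n_def by auto
      have "xs!(n-1) = xs!i \<or> xs!(n-1) = xs!Suc i" using e(2) i pe_inc[OF AD[OF i(1)]] by simp
      moreover have "n - 1 < length xs" "i < length xs" "Suc i < length xs" using n1 i(1) unfolding n_def by auto
      ultimately have "n - 1 = i \<or> n - 1 = Suc i" using distinct_idx[OF dist] by blast
      then show False using i(1,2) ev unfolding n_def by presburger
    next
      case False
      then have "e \<in> N" "e \<notin> Od" using e(1) sw by auto
      then obtain i where "Suc i < n" "odd i" "e = pe xs i" using KEY[of e "n-1"] e(2) n1 by auto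
      then show False using \<open>e \<notin> Od\<close> unfolding Od_def n_def by auto
    qed
  qed
  show "covered (swp N xs) v" if od: "odd (length xs - 1)" and cv: "covered N v"
  proof -
    obtain e where e: "e \<in> N" "inc e v" using cv covered_iff by metis
    show ?thesis
    proof (cases "e \<in> Od")
      case False
      then show ?thesis using e sw covered_iff by blast
    next
      case True
      then obtain i where i: "Suc i < n" "odd i" "e = pe xs i" unfolding Od_def n_def by auto
      have "v = xs!i \<or> v = xs!Suc i" using e(2) i pe_inc[OF AD[OF i(1)]] by simp
      then show ?thesis
      proof
        assume v: "v = xs!i"
        obtain j where j: "i = Suc j" using i(2) by (cases i) auto
        have "Suc j < n" "even j" using i j by auto
        then have "pe xs j \<in> Ev" unfolding Ev_def n_def by auto
        moreover have "inc (pe xs j) v" using pe_inc[OF AD[OF \<open>Suc j < n\<close>]] v j by simp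
        ultimately show ?thesis using sw covered_iff by blast
      next
        assume v: "v = xs!Suc i"
        have "Suc (Suc i) < n" using i(1,2) od unfolding n_def by presburger
        moreover have "even (Suc i)" using i by simp
        ultimately have "pe xs (Suc i) \<in> Ev" unfolding Ev_def n_def by auto
        moreover have "inc (pe xs (Suc i)) v" using pe_inc[OF AD[OF \<open>Suc (Suc i) < n\<close>]] v by simp
        ultimately show ?thesis using sw covered_iff by blast
      qed
    qed
  qed
  show "\<And>i. Suc i < length xs \<Longrightarrow> even i \<Longrightarrow> pe xs i \<in> swp N xs"
    unfolding sw Ev_def by auto
  show "\<And>e. e \<in> N \<Longrightarrow> e \<notin> swp N xs \<Longrightarrow> \<exists>i. Suc i < length xs \<and> odd i \<and> e = pe xs i"
    unfolding sw Od_def by auto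
qed

lemma altp_snoc:
  assumes "altp F X1 X2 xs" "w \<notin> set xs" "adj F (last xs) w"
    "even (length xs - 1) \<Longrightarrow> adj X1 (last xs) w" "odd (length xs - 1) \<Longrightarrow> adj X2 (last xs) w"
  shows "altp F X1 X2 (xs @ [w])" "hd (xs @ [w]) = hd xs"
proof -
  have ne: "xs \<noteq> []" using assms(1) by (simp add: altp_def)
  have lx: "last xs = xs ! (length xs - 1)" using ne by (simp add: last_conv_nth)
  show "hd (xs @ [w]) = hd xs" using ne by simp
  have H: "adj F ((xs@[w])!i) ((xs@[w])!Suc i) \<and> (even i \<longrightarrow> adj X1 ((xs@[w])!i) ((xs@[w])!Suc i))
     \<and> (odd i \<longrightarrow> adj X2 ((xs@[w])!i) ((xs@[w])!Suc i))" if i: "Suc i < length (xs@[w])" for i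
  proof (cases "Suc i < length xs")
    case True
    then show ?thesis using assms(1) by (simp add: nth_append altp_def)
  next
    case False
    then have "i = length xs - 1" using i by simp
    then have "(xs@[w])!i = last xs" "(xs@[w])!Suc i = w" using ne lx by (auto simp: nth_append)
    then show ?thesis using assms(3,4,5) \<open>i = length xs - 1\<close> by auto
  qed
  show "altp F X1 X2 (xs @ [w])" using H assms(1,2) unfolding altp_def by auto
qed

lemma adj_vt: "adj X u w \<Longrightarrow> w \<in> Ap ` fst ` X \<union> Po ` snd ` X"
  by (auto simp: adj_def image_iff) (metis fst_conv snd_conv)+

lemma build:
  assumes m1: "is_matching F1 X1" and m2: "is_matching F2 X2" and s1: "X1 \<subseteq> F" and s2: "X2 \<subseteq> F"
    and f1: "finite X1" and f2: "finite X2" and v: "\<not> covered X2 v"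
  shows "\<exists>xs. altp F X1 X2 xs \<and> hd xs = v \<and> (odd (length xs - 1) \<longrightarrow> \<not> covered X2 (last xs))
     \<and> (even (length xs - 1) \<longrightarrow> \<not> covered X1 (last xs))"
proof -
  define Vt where "Vt = insert v (Ap ` fst ` (X1 \<union> X2) \<union> Po ` snd ` (X1 \<union> X2))"
  have fVt: "finite Vt" unfolding Vt_def using f1 f2 by simp
  define S where "S xs \<longleftrightarrow> altp F X1 X2 xs \<and> hd xs = v" for xs
  have S0: "S [v]" unfolding S_def altp_def by simp
  have bnd: "length xs < Suc (card Vt)" if "S xs" for xs
  proof -
    have "set xs \<subseteq> Vt"
    proof
      fix x assume "x \<in> set xs"
      then obtain j where j: "j < length xs" "x = xs!j" by (auto simp: in_set_conv_nth)
      show "x \<in> Vt"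
      proof (cases j)
        case 0
        have "xs \<noteq> []" "hd xs = v" using that unfolding S_def altp_def by auto
        then have "x = v" using j 0 by (simp add: hd_conv_nth)
        then show ?thesis unfolding Vt_def by simp
      next
        case (Suc i)
        have ap0: "altp F X1 X2 xs" using that unfolding S_def by blast
        have si: "Suc i < length xs" using j Suc by simp
        have "(even i \<longrightarrow> adj X1 (xs!i) (xs!Suc i)) \<and> (odd i \<longrightarrow> adj X2 (xs!i) (xs!Suc i))"
          using ap0 si unfolding altp_def by blast
        then have "adj X1 (xs!i) x \<or> adj X2 (xs!i) x" using j Suc by auto
        then have "x \<in> Ap ` fst ` X1 \<union> Po ` snd ` X1 \<or> x \<in> Ap ` fst ` X2 \<union> Po ` snd ` X2"
          using adj_vt by metis
        then show ?thesis unfolding Vt_def by blast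
      qed
    qed
    then have "card (set xs) \<le> card Vt" using fVt card_mono by blast
    then show ?thesis using that distinct_card[of xs] by (simp add: S_def altp_def)
  qed
  obtain xs where xs: "S xs" and mx: "\<And>ys. S ys \<Longrightarrow> length ys \<le> length xs"
    using ex_has_greatest_nat[of S "[v]" length "Suc (card Vt)"] S0 bnd by blast
  have ap: "altp F X1 X2 xs" and hd: "hd xs = v" using xs by (auto simp: S_def)
  have ne: "xs \<noteq> []" and dist: "distinct xs" using ap by (auto simp: altp_def)
  define k where "k = length xs - 1"
  have kl: "k < length xs" using ne by (simp add: k_def)
  have lx: "last xs = xs!k" using ne by (simp add: last_conv_nth k_def)
  have E: "\<And>j. Suc j < length xs \<Longrightarrow> adj F (xs!j) (xs!Suc j) \<and> (even j \<longrightarrow> adj X1 (xs!j) (xs!Suc j)) \<and> (odd j \<longrightarrow> adj X2 (xs!j) (xs!Suc j))"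
    using ap by (auto simp: altp_def)
  have ext: False if "w \<notin> set xs" "adj F (last xs) w" "even k \<Longrightarrow> adj X1 (last xs) w" "odd k \<Longrightarrow> adj X2 (last xs) w" for w
  proof -
    have "S (xs @ [w])" using altp_snoc[OF ap that(1,2)] that(3,4) hd unfolding S_def k_def by auto
    then show False using mx[of "xs @ [w]"] by simp
  qed
  have c1: "\<not> covered X1 (last xs)" if ev: "even k"
  proof
    assume "covered X1 (last xs)"
    then obtain w where w: "adj X1 (xs!k) w" using lx by (auto simp: covered_def)
    have "w \<notin> set xs"
    proof
      assume "w \<in> set xs"
      then obtain j where j: "j < length xs" "w = xs!j" by (auto simp: in_set_conv_nth)
      show False
      proof (cases "j = k")
        case True then show False using w j adj_neq by blast
      next
        case False
        then have jk: "j < k" using j k_def by simp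
        have wj: "adj X1 (xs!k) (xs!j)" using w j by simp
        show False
        proof (cases "even j")
          case True
          have aj: "adj X1 (xs!j) (xs!Suc j)" using E[of j] jk True k_def by simp
          have "xs!Suc j = xs!k" using match_share[OF m1 adj_sym[OF aj] adj_sym[OF wj]] by simp
          then have "Suc j = k" using distinct_idx[OF dist] jk kl by simp
          then show False using True ev by presburger
        next
          case False
          then obtain i where i: "j = Suc i" "even i" by (cases j) auto
          have aj: "adj X1 (xs!i) (xs!j)" using E[of i] i jk k_def by simp
          have "xs!i = xs!k" using match_share[OF m1 aj adj_sym[OF wj]] by simp
          then have "i = k" using distinct_idx[OF dist] i jk kl by simp
          then show False using i jk by simp
        qed
      qed
    qed
    moreover have "adj F (last xs) w" using adj_mono[OF s1] w lx by simp
    ultimately show False using ext[of w] w lx ev by auto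
  qed
  have c2: "\<not> covered X2 (last xs)" if od: "odd k"
  proof
    assume "covered X2 (last xs)"
    then obtain w where w: "adj X2 (xs!k) w" using lx by (auto simp: covered_def)
    have "w \<notin> set xs"
    proof
      assume "w \<in> set xs"
      then obtain j where j: "j < length xs" "w = xs!j" by (auto simp: in_set_conv_nth)
      show False
      proof (cases "j = k")
        case True then show False using w j adj_neq by blast
      next
        case False
        then have jk: "j < k" using j k_def by simp
        have wj: "adj X2 (xs!k) (xs!j)" using w j by simp
        show False
        proof (cases j)
          case 0
          then have "xs!j = v" using hd ne by (simp add: hd_conv_nth)
          then have "covered X2 v" using adj_sym[OF wj] unfolding covered_def by blast
          then show False using v by simp
        next
          case (Suc i)
          show False
          proof (cases "even j")
            case True
            then have "odd i" using Suc by simp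
            have aj: "adj X2 (xs!i) (xs!j)" using E[of i] Suc \<open>odd i\<close> jk k_def by simp
            have "xs!i = xs!k" using match_share[OF m2 aj adj_sym[OF wj]] by simp
            then have "i = k" using distinct_idx[OF dist] Suc jk kl by simp
            then show False using Suc jk by simp
          next
            case False
            have aj: "adj X2 (xs!j) (xs!Suc j)" using E[of j] jk False k_def by simp
            have "xs!Suc j = xs!k" using match_share[OF m2 adj_sym[OF aj] adj_sym[OF wj]] by simp
            then have "Suc j = k" using distinct_idx[OF dist] jk kl by simp
            then show False using False od by presburger
          qed
        qed
      qed
    qed
    moreover have "adj F (last xs) w" using adj_mono[OF s2] w lx by simp
    ultimately show False using ext[of w] w lx od by auto
  qed
  show ?thesis using ap hd c1 c2 unfolding k_def by blast
qed

lemma aug_not_max: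
  assumes "is_matching F N" "finite N" "alt_path F N xs" "odd (length xs - 1)" "\<not> covered N (last xs)"
  shows "\<not> max_matching F N"
proof
  assume mx: "max_matching F N"
  have o1: "(length xs - 1) mod 2 = 1" using assms(4) by presburger
  have "is_matching F (swp N xs)" "card (swp N xs) = card N + 1"
    using swp_props(1,2)[OF assms(1,2,3)] assms(4,5) o1 by auto
  then show False using mx unfolding max_matching_def by fastforce
qed

lemma inj_fst_match: "is_matching F N \<Longrightarrow> inj_on fst N"
  unfolding inj_on_def is_matching_def by (metis prod.collapse)

lemma berge:
  assumes fF: "finite F" and mN: "is_matching F N" and mK: "is_matching F K" and lt: "card N < card K"
  shows "\<exists>xs. alt_path F N xs \<and> odd (length xs - 1) \<and> \<not> covered N (last xs)"
  using mK lt
proof (induction "card (N - K)" arbitrary: K rule: less_induct)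
  case less
  have fN: "finite N" "finite K" using mN less.prems(1) fF finite_subset unfolding is_matching_def by metis+
  have "card (fst ` K) = card K" "card (fst ` N) = card N"
    using card_image inj_fst_match mN less.prems(1) by metis+
  then have "\<not> fst ` K \<subseteq> fst ` N" using less.prems(2) card_mono fN by (metis finite_imageI not_le)
  then obtain e where e: "e \<in> K" "fst e \<notin> fst ` N" by blast
  obtain a q where "e = (a,q)" by (cases e)
  then have aq: "(a,q) \<in> K" "a \<notin> fst ` N" using e by auto
  have cK: "covered K (Ap a)" using aq by (auto simp: covered_def adj_def)
  have uN: "\<not> covered N (Ap a)" using aq by (auto simp: covered_def adj_def image_iff)
  have sK: "K \<subseteq> F" "N \<subseteq> F" using less.prems(1) mN by (auto simp: is_matching_def)
  obtain xs where xs: "altp F K N xs" "hd xs = Ap a"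
    "odd (length xs - 1) \<longrightarrow> \<not> covered N (last xs)" "even (length xs - 1) \<longrightarrow> \<not> covered K (last xs)"
    using build[OF less.prems(1) mN sK fN(2) fN(1) uN] by blast
  show ?case
  proof (cases "odd (length xs - 1)")
    case True
    have "alt_path F N xs" using altp_alt_path[OF xs(1) mN] xs(2) uN by simp
    then show ?thesis using True xs(3) by blast
  next
    case False
    have ne: "xs \<noteq> []" using xs(1) by (simp add: altp_def)
    have "length xs - 1 \<noteq> 0"
    proof
      assume "length xs - 1 = 0"
      then have "last xs = hd xs" using ne by (simp add: last_conv_nth hd_conv_nth)
      then show False using xs(2,4) cK False by simp
    qed
    then have len: "Suc 0 < length xs" by simp
    define ys where "ys = rev xs"
    have apy: "altp F N K ys" unfolding ys_def using altp_rev[OF xs(1)] False by simp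
    have hy: "hd ys = last xs" using ne by (simp add: ys_def hd_rev)
    have ucK: "\<not> covered K (last xs)" using xs(4) False by blast
    have apK: "alt_path F K ys" using altp_alt_path[OF apy less.prems(1)] hy ucK by simp
    have ly: "length ys = length xs" by (simp add: ys_def)
    have lstK: "odd (length ys - 1) \<longrightarrow> \<not> covered K (last ys)" using False ly by simp
    note sp = swp_props[OF less.prems(1) fN(2) apK lstK]
    have mK': "is_matching F (swp K ys)" using sp(1) False ly by simp
    have cK': "card (swp K ys) = card K" using sp(2) False ly by simp
    have sub: "N - swp K ys \<subseteq> N - K"
    proof
      fix e assume e: "e \<in> N - swp K ys"
      show "e \<in> N - K"
      proof (rule ccontr)
        assume "e \<notin> N - K"
        then have "e \<in> K" using e by simp
        then obtain i where i: "Suc i < length ys" "odd i" "e = pe ys i" using sp(6) e by blast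
        have "adj F (ys!i) (ys!Suc i)" using apy i by (simp add: altp_def)
        moreover have "\<not> adj N (ys!i) (ys!Suc i)" using notin_odd[OF mN apy i(2,1)] .
        ultimately have "e \<notin> N" using i adj_ep adj_mono[of F UNIV] unfolding pe_def by blast
        then show False using e by simp
      qed
    qed
    have e0: "pe ys 0 \<in> N - K" "pe ys 0 \<in> swp K ys"
    proof -
      have a1: "adj N (ys!0) (ys!Suc 0)" using apy len ly by (simp add: altp_def)
      have a2: "\<not> adj K (ys!0) (ys!Suc 0)" using apK len ly by (simp add: alt_path_def)
      show "pe ys 0 \<in> N - K" using a1 a2 adj_ep unfolding pe_def by blast
      show "pe ys 0 \<in> swp K ys" using sp(5)[of 0] len ly by simp
    qed
    have "N - swp K ys \<subset> N - K" using sub e0 by blast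
    then have "card (N - swp K ys) < card (N - K)" using fN by (meson finite_Diff psubset_card_mono)
    then show ?thesis using less.hyps mK' cK' less.prems(2) by simp
  qed
qed

definition EP where "EP F N v \<longleftrightarrow> (\<exists>xs. alt_path F N xs \<and> last xs = v \<and> even (length xs - 1))"
definition OP where "OP F N v \<longleftrightarrow> (\<exists>xs. alt_path F N xs \<and> last xs = v \<and> odd (length xs - 1))"

lemma uncov_EP: "\<not> covered N v \<Longrightarrow> EP F N v"
  unfolding EP_def by (rule exI[of _ "[v]"]) (simp add: alt_path_def)

lemma max_finite: "finite F \<Longrightarrow> max_matching F N \<Longrightarrow> finite N"
  unfolding max_matching_def is_matching_def using finite_subset by blast

lemma max_match: "max_matching F N \<Longrightarrow> is_matching F N"
  unfolding max_matching_def by blast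

lemma alt_snoc:
  assumes "alt_path F N xs" "w \<notin> set xs" "adj F (last xs) w" "adj N (last xs) w \<longleftrightarrow> odd (length xs - 1)"
  shows "alt_path F N (xs @ [w])"
proof -
  have ne: "xs \<noteq> []" using assms(1) by (simp add: alt_path_def)
  have lx: "last xs = xs ! (length xs - 1)" using ne by (simp add: last_conv_nth)
  have H: "adj F ((xs@[w])!i) ((xs@[w])!Suc i) \<and> (adj N ((xs@[w])!i) ((xs@[w])!Suc i) \<longleftrightarrow> odd i)"
    if i: "Suc i < length (xs@[w])" for i
  proof (cases "Suc i < length xs")
    case True
    then show ?thesis using assms(1) by (simp add: nth_append alt_path_def)
  next
    case False
    then have "i = length xs - 1" using i by simp
    then have "(xs@[w])!i = last xs" "(xs@[w])!Suc i = w" using ne lx by (auto simp: nth_append)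
    then show ?thesis using assms(3,4) \<open>i = length xs - 1\<close> by auto
  qed
  show ?thesis using H assms(1,2) ne unfolding alt_path_def by auto
qed

lemma ap_parity: "alt_path F N xs \<Longrightarrow> i < length xs \<Longrightarrow> isA (xs!i) = (isA (xs!0) = even i)"
  using parity[of xs F i] unfolding alt_path_def by blast

lemma ap_adjN: "alt_path F N xs \<Longrightarrow> Suc i < length xs \<Longrightarrow> adj N (xs!i) (xs!Suc i) \<longleftrightarrow> odd i"
  unfolding alt_path_def by blast

lemma ap_adjF: "alt_path F N xs \<Longrightarrow> Suc i < length xs \<Longrightarrow> adj F (xs!i) (xs!Suc i)"
  unfolding alt_path_def by blast

lemma EV:
  assumes fF: "finite F" and mN: "max_matching F N" and mN': "max_matching F N'" and v: "\<not> covered N' v"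
  shows "EP F N v"
proof -
  have m: "is_matching F N" "is_matching F N'" using mN mN' max_match by auto
  have s: "N \<subseteq> F" "N' \<subseteq> F" using m by (auto simp: is_matching_def)
  have f: "finite N" "finite N'" using mN mN' fF max_finite by auto
  obtain xs where xs: "altp F N N' xs" "hd xs = v" "odd (length xs - 1) \<longrightarrow> \<not> covered N' (last xs)"
     "even (length xs - 1) \<longrightarrow> \<not> covered N (last xs)"
    using build[OF m(1) m(2) s f v] by blast
  have ne: "xs \<noteq> []" using xs(1) by (simp add: altp_def)
  show ?thesis
  proof (cases "odd (length xs - 1)")
    case True
    have "alt_path F N' xs" using altp_alt_path[OF xs(1) m(2)] xs(2) v by simp
    then have "\<not> max_matching F N'" using aug_not_max[OF m(2) f(2)] True xs(3) by blast
    then show ?thesis using mN' by simp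
  next
    case False
    have a: "altp F N' N (rev xs)" using altp_rev[OF xs(1)] False by simp
    have "hd (rev xs) = last xs" using ne by (simp add: hd_rev)
    moreover have "\<not> covered N (last xs)" using xs(4) False by blast
    ultimately have "alt_path F N (rev xs)" using altp_alt_path[OF a m(1)] by simp
    moreover have "last (rev xs) = v" using ne xs(2) by (simp add: last_rev)
    ultimately show ?thesis unfolding EP_def using False by auto
  qed
qed

lemma even_transfer:
  assumes fF: "finite F" and mN: "max_matching F N" and mN1: "max_matching F N1" and e: "EP F N1 v"
  shows "EP F N v"
proof -
  obtain xs where xs: "alt_path F N1 xs" "last xs = v" "even (length xs - 1)" using e by (auto simp: EP_def)
  have m1: "is_matching F N1" "finite N1" using mN1 fF max_match max_finite by auto
  have lst: "odd (length xs - 1) \<longrightarrow> \<not> covered N1 (last xs)" using xs(3) by simp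
  note sp = swp_props[OF m1 xs(1) lst]
  have c: "card (swp N1 xs) = card N1" using sp(2) xs(3) by simp
  have "max_matching F (swp N1 xs)" using sp(1) c mN1 unfolding max_matching_def by simp
  moreover have "\<not> covered (swp N1 xs) v" using sp(3) xs by simp
  ultimately show ?thesis using EV[OF fF mN] by blast
qed

lemma ext_odd:
  assumes m: "is_matching F' N" and e: "EP F N u" and a: "adj F u v"
  shows "OP F N v"
proof -
  obtain xs where xs: "alt_path F N xs" "last xs = u" "even (length xs - 1)" using e by (auto simp: EP_def)
  have ne: "xs \<noteq> []" using xs(1) by (simp add: alt_path_def)
  define L where "L = length xs - 1"
  have Ll: "L < length xs" using ne by (simp add: L_def)
  have lx: "xs!L = u" using xs(2) ne by (simp add: last_conv_nth L_def)
  show ?thesis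
  proof (cases "v \<in> set xs")
    case True
    then obtain j where j: "j < length xs" "v = xs!j" by (auto simp: in_set_conv_nth)
    have p1: "isA (xs!j) = (isA (xs!0) = even j)" using ap_parity[OF xs(1) j(1)] .
    have p2: "isA (xs!L) = (isA (xs!0) = even L)" using ap_parity[OF xs(1) Ll] .
    have "isA u \<longleftrightarrow> \<not> isA v" using adj_side[OF a] .
    then have "odd j" using p1 p2 lx j(2) xs(3) L_def by auto
    have "alt_path F N (take (Suc j) xs)" "last (take (Suc j) xs) = xs!j"
      using alt_path_take[OF xs(1), of "Suc j"] j by auto
    moreover have "length (take (Suc j) xs) - 1 = j" using j by simp
    ultimately show ?thesis unfolding OP_def using \<open>odd j\<close> j(2) by metis
  next
    case False
    have nN: "\<not> adj N u v"
    proof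
      assume uv: "adj N u v"
      show False
      proof (cases L)
        case 0
        then have "u = hd xs" using lx ne by (simp add: hd_conv_nth)
        then show False using uv xs(1) by (auto simp: alt_path_def covered_def)
      next
        case (Suc i)
        have "adj N (xs!i) (xs!L)" using ap_adjN[OF xs(1), of i] Suc Ll xs(3) L_def by simp
        then have "xs!i = v" using match_share[OF m _ uv] lx by simp
        then show False using False Suc Ll by (metis Suc_lessD nth_mem)
      qed
    qed
    have "alt_path F N (xs @ [v])" using alt_snoc[OF xs(1) False] a xs(2,3) nN by simp
    moreover have "last (xs @ [v]) = v" by simp
    moreover have "odd (length (xs @ [v]) - 1)" using xs(3) ne by simp
    ultimately show ?thesis unfolding OP_def by blast
  qed
qed

lemma odd_transfer:
  assumes fF: "finite F" and mN: "max_matching F N" and mN1: "max_matching F N1" and o: "OP F N1 v"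
  shows "OP F N v"
proof -
  obtain xs where xs: "alt_path F N1 xs" "last xs = v" "odd (length xs - 1)" using o by (auto simp: OP_def)
  have ne: "xs \<noteq> []" using xs(1) by (simp add: alt_path_def)
  define L where "L = length xs - 1"
  have "L \<noteq> 0" using xs(3) unfolding L_def by (metis odd_pos neq0_conv)
  then obtain i where i: "L = Suc i" using not0_implies_Suc by blast
  have Ll: "L < length xs" using ne by (simp add: L_def)
  have lx: "xs!L = v" using xs(2) ne by (simp add: last_conv_nth L_def)
  have "alt_path F N1 (take (Suc i) xs)" "last (take (Suc i) xs) = xs!i"
    using alt_path_take[OF xs(1), of "Suc i"] i Ll by auto
  moreover have "length (take (Suc i) xs) - 1 = i" using i Ll by simp
  moreover have "even i" using i xs(3) L_def by simp
  ultimately have "EP F N1 (xs!i)" unfolding EP_def by metis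
  then have "EP F N (xs!i)" using even_transfer[OF fF mN mN1] by blast
  moreover have "adj F (xs!i) v" using ap_adjF[OF xs(1), of i] i Ll lx by simp
  ultimately show ?thesis using ext_odd[OF max_match[OF mN]] by blast
qed

lemma partner_EO:
  assumes m: "is_matching F' N" and e: "EP F N u" and a: "adj N u w"
  shows "OP F N w"
proof -
  obtain xs where xs: "alt_path F N xs" "last xs = u" "even (length xs - 1)" using e by (auto simp: EP_def)
  have ne: "xs \<noteq> []" using xs(1) by (simp add: alt_path_def)
  define L where "L = length xs - 1"
  have Ll: "L < length xs" using ne by (simp add: L_def)
  have lx: "xs!L = u" using xs(2) ne by (simp add: last_conv_nth L_def)
  show ?thesis
  proof (cases L)
    case 0
    then have "u = hd xs" using lx ne by (simp add: hd_conv_nth)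
    then show ?thesis using a xs(1) by (auto simp: alt_path_def covered_def)
  next
    case (Suc i)
    have "adj N (xs!i) (xs!L)" using ap_adjN[OF xs(1), of i] Suc Ll xs(3) L_def by simp
    then have wi: "xs!i = w" using match_share[OF m _ a] lx by simp
    have "alt_path F N (take (Suc i) xs)" "last (take (Suc i) xs) = xs!i"
      using alt_path_take[OF xs(1), of "Suc i"] Suc Ll by auto
    moreover have "length (take (Suc i) xs) - 1 = i" using Suc Ll by simp
    moreover have "odd i" using Suc xs(3) L_def by simp
    ultimately show ?thesis unfolding OP_def using wi by metis
  qed
qed

lemma partner_OE:
  assumes m: "is_matching F N" and o: "OP F N u" and a: "adj N u w"
  shows "EP F N w"
proof -
  obtain xs where xs: "alt_path F N xs" "last xs = u" "odd (length xs - 1)" using o by (auto simp: OP_def)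
  have ne: "xs \<noteq> []" using xs(1) by (simp add: alt_path_def)
  define L where "L = length xs - 1"
  have Ll: "L < length xs" using ne by (simp add: L_def)
  have lx: "xs!L = u" using xs(2) ne by (simp add: last_conv_nth L_def)
  have wn: "w \<notin> set xs"
  proof
    assume "w \<in> set xs"
    then obtain j where j: "j < length xs" "w = xs!j" by (auto simp: in_set_conv_nth)
    have p1: "isA (xs!j) = (isA (xs!0) = even j)" using ap_parity[OF xs(1) j(1)] .
    have p2: "isA (xs!L) = (isA (xs!0) = even L)" using ap_parity[OF xs(1) Ll] .
    have "isA u \<longleftrightarrow> \<not> isA w" using adj_side[OF a] .
    then have ej: "even j" using p1 p2 lx j(2) xs(3) L_def by auto
    show False
    proof (cases j)
      case 0
      then have "w = hd xs" using j ne by (simp add: hd_conv_nth)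
      then show False using a xs(1) adj_sym by (auto simp: alt_path_def covered_def)
    next
      case (Suc i)
      then have "odd i" using ej by simp
      have "adj N (xs!i) (xs!j)" using ap_adjN[OF xs(1), of i] Suc j(1) \<open>odd i\<close> by simp
      then have "xs!i = u" using match_share[OF m _ adj_sym[OF a]] j(2) by simp
      then have "i = L" using lx distinct_idx[of xs i L] xs(1) Ll Suc j(1) by (simp add: alt_path_def)
      then show False using Suc j(1) L_def by simp
    qed
  qed
  have aF: "adj F u w" using a m adj_mono unfolding is_matching_def by blast
  have "alt_path F N (xs @ [w])" using alt_snoc[OF xs(1) wn] aF a xs(2,3) by simp
  moreover have "last (xs @ [w]) = w" by simp
  moreover have "even (length (xs @ [w]) - 1)" using xs(3) ne by simp
  ultimately show ?thesis unfolding EP_def by blast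
qed

lemma EO_disjoint:
  assumes fF: "finite F" and mN: "max_matching F N" and e: "EP F N v" and o: "OP F N v"
  shows False
proof -
  obtain xs where xs: "alt_path F N xs" "last xs = v" "even (length xs - 1)" using e by (auto simp: EP_def)
  have m1: "is_matching F N" "finite N" using mN fF max_match max_finite by auto
  have lst: "odd (length xs - 1) \<longrightarrow> \<not> covered N (last xs)" using xs(3) by simp
  note sp = swp_props[OF m1 xs(1) lst]
  have c: "card (swp N xs) = card N" using sp(2) xs(3) by simp
  have mx: "max_matching F (swp N xs)" using sp(1) c mN unfolding max_matching_def by simp
  have uc: "\<not> covered (swp N xs) v" using sp(3) xs by simp
  have "OP F (swp N xs) v" using odd_transfer[OF fF mx mN o] .
  then obtain ys where ys: "alt_path F (swp N xs) ys" "last ys = v" "odd (length ys - 1)" by (auto simp: OP_def)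
  have "\<not> max_matching F (swp N xs)" using aug_not_max[OF sp(1) _ ys(1) ys(3)] ys(2) uc finite_subset fF sp(1)
    unfolding is_matching_def by blast
  then show False using mx by simp
qed

lemma even_vs_iff:
  assumes "finite F" "max_matching F N"
  shows "v \<in> even_vs V F \<longleftrightarrow> v \<in> V \<and> EP F N v"
  using even_transfer[OF assms] assms(2) unfolding even_vs_def EP_def by blast

lemma odd_vs_iff:
  assumes "finite F" "max_matching F N"
  shows "v \<in> odd_vs V F \<longleftrightarrow> v \<in> V \<and> OP F N v"
  using odd_transfer[OF assms] assms(2) unfolding odd_vs_def OP_def by blast

definition vok :: "('a,'q) vert set \<Rightarrow> ('a\<times>'q) set \<Rightarrow> bool" where
  "vok V F \<longleftrightarrow> (\<forall>a q. (a,q) \<in> F \<longrightarrow> Ap a \<in> V \<and> Po q \<in> V)"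

locale cls =
  fixes V :: "('a,'q) vert set" and F :: "('a\<times>'q) set" and N :: "('a\<times>'q) set"
  assumes fF: "finite F" and mx: "max_matching F N" and vk: "vok V F"
begin

abbreviation "Ev \<equiv> even_vs V F"
abbreviation "Ov \<equiv> odd_vs V F"
abbreviation "Uv \<equiv> unr_vs V F"

lemma mN: "is_matching F N" using mx max_match by blast
lemma NF: "N \<subseteq> F" using mN by (simp add: is_matching_def)

lemma E_iff: "v \<in> Ev \<longleftrightarrow> v \<in> V \<and> EP F N v" using even_vs_iff[OF fF mx] .
lemma O_iff: "v \<in> Ov \<longleftrightarrow> v \<in> V \<and> OP F N v" using odd_vs_iff[OF fF mx] .
lemma U_iff: "v \<in> Uv \<longleftrightarrow> v \<in> V \<and> v \<notin> Ev \<and> v \<notin> Ov" by (auto simp: unr_vs_def)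

lemma EO: "v \<in> Ev \<Longrightarrow> v \<in> Ov \<Longrightarrow> False"
  using E_iff O_iff EO_disjoint[OF fF mx] by blast

lemma uncov_E: "v \<in> V \<Longrightarrow> \<not> covered N v \<Longrightarrow> v \<in> Ev"
  using E_iff uncov_EP by blast

lemma cov_OU: "v \<in> Ov \<union> Uv \<Longrightarrow> covered N v"
proof (rule ccontr)
  assume v: "v \<in> Ov \<union> Uv" "\<not> covered N v"
  have "v \<in> V" using v(1) by (auto simp: odd_vs_def unr_vs_def)
  then have "v \<in> Ev" using uncov_E v(2) by blast
  then show False using v(1) EO U_iff by blast
qed

lemma inF: "(a,q) \<in> F \<Longrightarrow> Ap a \<in> V \<and> Po q \<in> V" using vk by (simp add: vok_def)

lemma adjF: "(a,q) \<in> F \<Longrightarrow> adj F (Ap a) (Po q)" by (auto simp: adj_def)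

lemma edge_EA: "(a,q) \<in> F \<Longrightarrow> Ap a \<in> Ev \<Longrightarrow> Po q \<in> Ov"
  using ext_odd[OF mN] adjF inF E_iff O_iff by blast
lemma edge_EP: "(a,q) \<in> F \<Longrightarrow> Po q \<in> Ev \<Longrightarrow> Ap a \<in> Ov"
  using ext_odd[OF mN] adjF adj_sym inF E_iff O_iff by metis

lemma adjN: "(a,q) \<in> N \<Longrightarrow> adj N (Ap a) (Po q)" by (auto simp: adj_def)

lemma match_class:
  assumes "(a,q) \<in> N"
  shows "Ap a \<in> Ev \<longleftrightarrow> Po q \<in> Ov" "Po q \<in> Ev \<longleftrightarrow> Ap a \<in> Ov" "Ap a \<in> Uv \<longleftrightarrow> Po q \<in> Uv"
proof -
  have V: "Ap a \<in> V" "Po q \<in> V" using inF assms NF by auto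
  have a1: "Ap a \<in> Ev \<Longrightarrow> Po q \<in> Ov" using partner_EO[OF mN] adjN[OF assms] E_iff O_iff V by blast
  have a2: "Po q \<in> Ev \<Longrightarrow> Ap a \<in> Ov" using partner_EO[OF mN] adj_sym[OF adjN[OF assms]] E_iff O_iff V by blast
  have a3: "Ap a \<in> Ov \<Longrightarrow> Po q \<in> Ev" using partner_OE[OF mN] adjN[OF assms] E_iff O_iff V by blast
  have a4: "Po q \<in> Ov \<Longrightarrow> Ap a \<in> Ev" using partner_OE[OF mN] adj_sym[OF adjN[OF assms]] E_iff O_iff V by blast
  show "Ap a \<in> Ev \<longleftrightarrow> Po q \<in> Ov" using a1 a4 by blast
  show "Po q \<in> Ev \<longleftrightarrow> Ap a \<in> Ov" using a2 a3 by blast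
  show "Ap a \<in> Uv \<longleftrightarrow> Po q \<in> Uv" using a1 a2 a3 a4 U_iff V by blast
qed

lemma match_nojoin: "e \<in> N \<Longrightarrow> \<not> joins_OU e Ov Uv"
proof -
  assume e: "e \<in> N"
  obtain a q where aq: "e = (a,q)" by (cases e)
  then have "(a,q) \<in> N" using e by simp
  note mc = match_class[OF this]
  show ?thesis unfolding aq joins_OU_def using mc EO U_iff by auto
qed

lemma edge_class:
  assumes "(a,q) \<in> F" "\<not> joins_OU (a,q) Ov Uv"
  shows "(Ap a \<in> Ov \<and> Po q \<in> Ev) \<or> (Po q \<in> Ov \<and> Ap a \<in> Ev) \<or> (Ap a \<in> Uv \<and> Po q \<in> Uv)"
proof -
  have V: "Ap a \<in> V" "Po q \<in> V" using inF assms by auto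
  show ?thesis using edge_EA[OF assms(1)] edge_EP[OF assms(1)] assms(2) V U_iff EO
    unfolding joins_OU_def by auto
qed

lemma count_le:
  assumes mK: "is_matching F K" and nj: "\<forall>e\<in>K. \<not> joins_OU e Ov Uv"
    and cv: "\<forall>v \<in> Ov \<union> Uv. covered K v"
  shows "card N \<le> card K"
proof -
  have fK: "finite K" using mK fF finite_subset unfolding is_matching_def by blast
  define kap where "kap e = (if Ap (fst e) \<in> Ov \<union> Uv then Ap (fst e) else Po (snd e))" for e :: "'a \<times> 'q"
  define g where "g e = (SOME f. f \<in> K \<and> inc f (kap e))" for e
  have kapOU: "kap e \<in> Ov \<union> Uv \<and> inc e (kap e)" if e: "e \<in> N" for e
  proof -
    obtain a q where aq: "e = (a,q)" by (cases e)
    have V: "Ap a \<in> V" using inF NF e aq by auto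
    show ?thesis
    proof (cases "Ap a \<in> Ov \<union> Uv")
      case True then show ?thesis by (simp add: kap_def aq inc_def)
    next
      case False
      then have "Ap a \<in> Ev" using V U_iff by blast
      then have "Po q \<in> Ov" using match_class(1) e aq by blast
      then show ?thesis using False by (simp add: kap_def aq inc_def)
    qed
  qed
  have gK: "g e \<in> K \<and> inc (g e) (kap e)" if e: "e \<in> N" for e
  proof -
    have "\<exists>f. f \<in> K \<and> inc f (kap e)" using cv kapOU[OF e] covered_iff by blast
    then show ?thesis unfolding g_def by (rule someI_ex)
  qed
  have inj: "inj_on g N"
  proof (rule inj_onI)
    fix e1 e2 assume e: "e1 \<in> N" "e2 \<in> N" "g e1 = g e2"
    show "e1 = e2"
    proof (cases "kap e1 = kap e2")
      case True
      then show ?thesis using match_inc_eq[OF mN e(1,2)] kapOU e by metis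
    next
      case False
      define f where "f = g e1"
      have f12: "f \<in> K \<and> inc f (kap e1)" using gK[OF e(1)] f_def by simp
      have f3: "inc f (kap e2)" using gK[OF e(2)] e(3) f_def by simp
      have f: "f \<in> K" "inc f (kap e1)" "inc f (kap e2)" using f12 f3 by auto
      obtain a q where aq: "f = (a,q)" by (cases f)
      have fF': "(a,q) \<in> F" using f(1) aq mK by (auto simp: is_matching_def)
      have both: "{kap e1, kap e2} = {Ap a, Po q}" using f(2,3) False aq by (auto simp: inc_def)
      have k12: "kap e1 \<in> Ov \<union> Uv" "kap e2 \<in> Ov \<union> Uv" using kapOU e(1,2) by auto
      have ou1: "Ap a \<in> Ov \<union> Uv" using both k12 by (metis insert_iff singletonD insertI1)
      have ou2: "Po q \<in> Ov \<union> Uv" using both k12 by (metis insert_iff singletonD insertI1 insertI2)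
      have nE1: "Ap a \<notin> Ev" using ou1 EO unfolding unr_vs_def by auto
      have nE2: "Po q \<notin> Ev" using ou2 EO unfolding unr_vs_def by auto
      have nE: "Ap a \<notin> Ev" "Po q \<notin> Ev" using nE1 nE2 by auto
      have nj': "\<not> joins_OU (a,q) Ov Uv" using nj f(1) aq by blast
      have U2: "Ap a \<in> Uv \<and> Po q \<in> Uv" using edge_class[OF fF' nj'] nE by blast
      have "Po q \<in> {kap e1, kap e2}" using both by simp
      then have "\<exists>e\<in>{e1,e2}. kap e = Po q" by auto
      then obtain e where ee: "e \<in> N" "kap e = Po q" using e by blast
      obtain a' q' where aq': "e = (a',q')" by (cases e)
      have "\<not> Ap a' \<in> Ov \<union> Uv" using ee aq' by (auto simp: kap_def split: if_splits)
      moreover have "q' = q" using ee aq' by (auto simp: kap_def split: if_splits)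
      moreover have "Ap a' \<in> V" using inF NF ee aq' by auto
      ultimately have "Ap a' \<in> Ev" "(a',q) \<in> N" using U_iff ee aq' by auto
      then have "Po q \<in> Ov" using match_class(1) by blast
      then show ?thesis using U2 U_iff by blast
    qed
  qed
  have "g ` N \<subseteq> K" using gK by blast
  then show ?thesis using card_inj_on_le[OF inj _ fK] by blast
qed

end




locale rmi =
  fixes A :: "'a set" and P :: "'p set" and E :: "('a \<times> 'p) set"
    and rank :: "'a \<Rightarrow> 'p \<Rightarrow> nat" and r :: nat
    and M :: "('a \<times> ('p + 'a)) set"
  assumes inst: "rm_instance A P E rank r"
    and rm: "rank_maximal A E rank r M"
begin

abbreviation "X \<equiv> xedges A E"
abbreviation "V \<equiv> verts A P"
definition rk :: "'a \<times> ('p + 'a) \<Rightarrow> nat" where "rk e = case_prod (xrank rank r) e"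
abbreviation "G i \<equiv> Gp A P E rank r i"
abbreviation "Ec i \<equiv> Ecl A P E rank r i"
abbreviation "Oc i \<equiv> Ocl A P E rank r i"
abbreviation "Uc i \<equiv> Ucl A P E rank r i"
definition J :: "'a \<times> ('p + 'a) \<Rightarrow> nat \<Rightarrow> bool" where "J e i = joins_OU e (Oc i) (Uc i)"
definition OU :: "nat \<Rightarrow> ('a, 'p + 'a) vert set" where "OU i = Oc i \<union> Uc i"

lemma finA: "finite A" and finP: "finite P" and EAP: "E \<subseteq> A \<times> P"
  and rkE: "\<And>a p. (a,p) \<in> E \<Longrightarrow> 1 \<le> rank a p \<and> rank a p \<le> r"
  using inst unfolding rm_instance_def by auto

lemma fX: "finite X"
proof -
  have "X \<subseteq> A \<times> (Inl ` P \<union> Inr ` A)" using EAP unfolding xedges_def by auto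
  moreover have "finite (A \<times> (Inl ` P \<union> Inr ` A))" using finA finP by simp
  ultimately show ?thesis using finite_subset by blast
qed

lemma X_rk: "e \<in> X \<Longrightarrow> 1 \<le> rk e \<and> rk e \<le> r + 1"
proof -
  assume "e \<in> X"
  then have "(\<exists>a p. (a,p) \<in> E \<and> e = (a, Inl p)) \<or> (\<exists>a. a \<in> A \<and> e = (a, Inr a))"
    unfolding xedges_def by blast
  then show ?thesis
  proof
    assume "\<exists>a p. (a,p) \<in> E \<and> e = (a, Inl p)"
    then obtain a p where "(a,p) \<in> E" "e = (a, Inl p)" by blast
    then show ?thesis using rkE[of a p] by (simp add: rk_def xrank_def)
  next
    assume "\<exists>a. a \<in> A \<and> e = (a, Inr a)"
    then show ?thesis by (auto simp: rk_def xrank_def)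
  qed
qed

lemma X_mem: "(a,q) \<in> X \<Longrightarrow> a \<in> A \<and> q \<in> posts A P"
  unfolding xedges_def posts_def using EAP by auto

lemma vokX: "F \<subseteq> X \<Longrightarrow> vok V F"
  unfolding vok_def verts_def using X_mem by blast

lemma irv_snd: "snd (irv V X (xrank rank r) k) =
   {e \<in> X. Suc k < rk e \<and> (\<forall>j. 1 \<le> j \<and> j \<le> k \<longrightarrow> \<not> incident e (OU j))}"
proof (induction k)
  case 0 then show ?case by (auto simp: rk_def)
next
  case (Suc k)
  have G: "fst (irv V X (xrank rank r) k) = G (Suc k)" by (simp add: Gp_def)
  show ?case
    unfolding irv.simps Let_def G Suc
    by (auto simp: OU_def Ocl_def Ucl_def rk_def le_Suc_eq)
qed

lemma irv_step: "e \<in> fst (irv V X (xrank rank r) (Suc k)) \<longleftrightarrow>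
   (e \<in> G (Suc k) \<and> \<not> J e (Suc k)) \<or>
   (e \<in> snd (irv V X (xrank rank r) k) \<and> \<not> incident e (OU (Suc k)) \<and> rk e = Suc (Suc k))"
  by (simp add: Let_def Gp_def J_def OU_def Ocl_def Ucl_def rk_def)

lemma allSuc: "(\<forall>j. a \<le> j \<and> j \<le> Suc k \<longrightarrow> Q j) \<longleftrightarrow> (\<forall>j. a \<le> j \<and> j \<le> k \<longrightarrow> Q j) \<and> (a \<le> Suc k \<longrightarrow> Q (Suc k))"
  by (auto simp: le_Suc_eq)

lemma irv_fst: "fst (irv V X (xrank rank r) k) =
   {e \<in> X. rk e \<le> Suc k \<and> (\<forall>j. 1 \<le> j \<and> j < rk e \<longrightarrow> \<not> incident e (OU j))
      \<and> (\<forall>j. rk e \<le> j \<and> j \<le> k \<longrightarrow> \<not> J e j)}"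
proof (induction k)
  case 0
  have ff: "case_prod (xrank rank r) e = rk e" for e by (simp add: rk_def)
  have r1: "e \<in> X \<Longrightarrow> rk e \<le> Suc 0 \<longleftrightarrow> rk e = 1" for e using X_rk[of e] by auto
  show ?case
  proof (rule set_eqI)
    fix e
    show "e \<in> fst (irv V X (xrank rank r) 0) \<longleftrightarrow> e \<in> {e \<in> X. rk e \<le> Suc 0 \<and> (\<forall>j. 1 \<le> j \<and> j < rk e \<longrightarrow> \<not> incident e (OU j))
      \<and> (\<forall>j. rk e \<le> j \<and> j \<le> 0 \<longrightarrow> \<not> J e j)}"
    proof
      assume "e \<in> fst (irv V X (xrank rank r) 0)"
      then have "e \<in> X" "rk e = 1" unfolding irv.simps ff by auto
      then show "e \<in> {e \<in> X. rk e \<le> Suc 0 \<and> (\<forall>j. 1 \<le> j \<and> j < rk e \<longrightarrow> \<not> incident e (OU j))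
        \<and> (\<forall>j. rk e \<le> j \<and> j \<le> 0 \<longrightarrow> \<not> J e j)}" by simp
    next
      assume a: "e \<in> {e \<in> X. rk e \<le> Suc 0 \<and> (\<forall>j. 1 \<le> j \<and> j < rk e \<longrightarrow> \<not> incident e (OU j))
        \<and> (\<forall>j. rk e \<le> j \<and> j \<le> 0 \<longrightarrow> \<not> J e j)}"
      then have ex: "e \<in> X" "rk e \<le> Suc 0" by auto
      then have "rk e = 1" using r1[OF ex(1)] by blast
      then show "e \<in> fst (irv V X (xrank rank r) 0)" unfolding irv.simps ff using ex by simp
    qed
  qed
next
  case (Suc k)
  have G: "G (Suc k) = {e \<in> X. rk e \<le> Suc k \<and> (\<forall>j. 1 \<le> j \<and> j < rk e \<longrightarrow> \<not> incident e (OU j))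
      \<and> (\<forall>j. rk e \<le> j \<and> j \<le> k \<longrightarrow> \<not> J e j)}" using Suc by (simp add: Gp_def)
  show ?case
  proof (rule set_eqI)
    fix e
    let ?I = "\<lambda>k. (\<forall>j. 1 \<le> j \<and> j \<le> k \<longrightarrow> \<not> incident e (OU j))"
    let ?I' = "(\<forall>j. 1 \<le> j \<and> j < rk e \<longrightarrow> \<not> incident e (OU j))"
    let ?Jq = "\<lambda>k. (\<forall>j. rk e \<le> j \<and> j \<le> k \<longrightarrow> \<not> J e j)"
    have st: "e \<in> fst (irv V X (xrank rank r) (Suc k)) \<longleftrightarrow>
      (e \<in> X \<and> rk e \<le> Suc k \<and> ?I' \<and> ?Jq k \<and> \<not> J e (Suc k)) \<or>
      (e \<in> X \<and> Suc k < rk e \<and> ?I k \<and> \<not> incident e (OU (Suc k)) \<and> rk e = Suc (Suc k))"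
      unfolding irv_step G irv_snd by blast
    have main: "e \<in> fst (irv V X (xrank rank r) (Suc k)) \<longleftrightarrow> (e \<in> X \<and> rk e \<le> Suc (Suc k) \<and> ?I' \<and> ?Jq (Suc k))"
    proof (cases "rk e \<le> Suc k")
      case True
      have "?Jq (Suc k) \<longleftrightarrow> ?Jq k \<and> \<not> J e (Suc k)" using True by (simp add: allSuc)
      then show ?thesis using st True by auto
    next
      case False
      have a: "?Jq (Suc k)" using False by auto
      have b: "?I' \<longleftrightarrow> ?I k \<and> \<not> incident e (OU (Suc k))" if rr: "rk e = Suc (Suc k)"
      proof -
        have "?I' \<longleftrightarrow> (\<forall>j. 1 \<le> j \<and> j \<le> Suc k \<longrightarrow> \<not> incident e (OU j))" using rr by (auto simp: less_Suc_eq_le)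
        also have "\<dots> \<longleftrightarrow> ?I k \<and> \<not> incident e (OU (Suc k))" by (simp add: allSuc)
        finally show ?thesis .
      qed
      show ?thesis using st False a b by auto
    qed
    then show "e \<in> fst (irv V X (xrank rank r) (Suc k)) \<longleftrightarrow> e \<in> {e \<in> X. rk e \<le> Suc (Suc k) \<and> (\<forall>j. 1 \<le> j \<and> j < rk e \<longrightarrow> \<not> incident e (OU j))
      \<and> (\<forall>j. rk e \<le> j \<and> j \<le> Suc k \<longrightarrow> \<not> J e j)}" by simp
  qed
qed

lemma Gp_char: "1 \<le> i \<Longrightarrow> e \<in> G i \<longleftrightarrow> e \<in> X \<and> rk e \<le> i \<and> (\<forall>j. 1 \<le> j \<and> j < rk e \<longrightarrow> \<not> incident e (OU j))
   \<and> (\<forall>j. rk e \<le> j \<and> j < i \<longrightarrow> \<not> J e j)"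
proof -
  assume i: "1 \<le> i"
  then obtain k where k: "i = Suc k" by (cases i) auto
  have "G i = fst (irv V X (xrank rank r) k)" using k by (simp add: Gp_def)
  also have "\<dots> = {e \<in> X. rk e \<le> Suc k \<and> (\<forall>j. 1 \<le> j \<and> j < rk e \<longrightarrow> \<not> incident e (OU j))
      \<and> (\<forall>j. rk e \<le> j \<and> j \<le> k \<longrightarrow> \<not> J e j)}" by (rule irv_fst)
  finally show ?thesis using k by (auto simp: less_Suc_eq_le)
qed

lemma G_X: "1 \<le> i \<Longrightarrow> G i \<subseteq> X" using Gp_char by blast
lemma finG: "1 \<le> i \<Longrightarrow> finite (G i)" using G_X fX finite_subset by blast
lemma G_rk: "1 \<le> i \<Longrightarrow> e \<in> G i \<Longrightarrow> rk e \<le> i" using Gp_char by blast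
lemma G_down: "1 \<le> j \<Longrightarrow> j \<le> i \<Longrightarrow> e \<in> G i \<Longrightarrow> rk e \<le> j \<Longrightarrow> e \<in> G j"
proof -
  assume a: "1 \<le> j" "j \<le> i" "e \<in> G i" "rk e \<le> j"
  have "1 \<le> i" using a by simp
  then show "e \<in> G j" using a Gp_char[of i e] Gp_char[of j e] by auto
qed
lemma G_noJ: "e \<in> G i \<Longrightarrow> rk e \<le> j \<Longrightarrow> j < i \<Longrightarrow> \<not> J e j"
proof -
  assume a: "e \<in> G i" "rk e \<le> j" "j < i"
  have "1 \<le> i" using a by simp
  then show ?thesis using a Gp_char[of i e] by auto
qed
lemma G_noinc: "e \<in> G i \<Longrightarrow> 1 \<le> i \<Longrightarrow> 1 \<le> j \<Longrightarrow> j < rk e \<Longrightarrow> \<not> incident e (OU j)"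
  using Gp_char by blast

lemma red_eq: "reduced A P E rank r = G (r+1) - {e. J e (r+1)}"
  by (simp add: reduced_def J_def)

lemma red_down: "e \<in> reduced A P E rank r \<Longrightarrow> 1 \<le> j \<Longrightarrow> j \<le> r + 1 \<Longrightarrow> rk e \<le> j \<Longrightarrow> e \<in> G j \<and> \<not> J e j"
proof -
  assume a: "e \<in> reduced A P E rank r" "1 \<le> j" "j \<le> r + 1" "rk e \<le> j"
  then have g: "e \<in> G (r+1)" "\<not> J e (r+1)" using red_eq by auto
  show ?thesis
  proof (cases "j = r + 1")
    case True then show ?thesis using g by simp
  next
    case False
    then show ?thesis using a g G_down G_noJ by auto
  qed
qed

lemma red_noinc: "e \<in> reduced A P E rank r \<Longrightarrow> 1 \<le> j \<Longrightarrow> j < rk e \<Longrightarrow> \<not> incident e (OU j)"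
  using red_eq G_noinc[of e "r+1" j] by auto

lemma red_X: "reduced A P E rank r \<subseteq> X" using red_eq G_X by auto

lemma incident_iff: "incident e S \<longleftrightarrow> (\<exists>v\<in>S. inc e v)"
  unfolding incident_def inc_def by auto

lemma Ec_eq: "Ec i = even_vs V (G i)" by (simp add: Ecl_def)
lemma Oc_eq: "Oc i = odd_vs V (G i)" by (simp add: Ocl_def)
lemma Uc_eq: "Uc i = unr_vs V (G i)" by (simp add: Ucl_def)

lemma clsG: "1 \<le> i \<Longrightarrow> max_matching (G i) N \<Longrightarrow> cls V (G i) N"
  unfolding cls_def using finG vokX G_X by blast

lemma M_match: "is_matching X M" using rm by (simp add: rank_maximal_def)
lemma M_X: "M \<subseteq> X" using M_match by (simp add: is_matching_def)
lemma finM: "finite M" using M_X fX finite_subset by blast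

lemma match_mono: "is_matching F N \<Longrightarrow> N \<subseteq> F' \<Longrightarrow> is_matching F' N"
  unfolding is_matching_def by blast
lemma match_sub: "is_matching F N \<Longrightarrow> N' \<subseteq> N \<Longrightarrow> is_matching F N'"
  unfolding is_matching_def by blast

definition Nm :: "nat \<Rightarrow> ('a \<times> ('p + 'a)) set" where "Nm i = {e \<in> M. rk e \<le> i}"
definition cnt :: "nat \<Rightarrow> ('a \<times> ('p + 'a)) set \<Rightarrow> nat" where "cnt j S = card {e \<in> S. rk e \<le> j}"

lemma sig_len: "length (signature rank r S) = r + 1" by (simp add: signature_def)
lemma sig_nth: "t < r + 1 \<Longrightarrow> signature rank r S ! t = card {e \<in> S. rk e = Suc t}"
  by (simp add: signature_def rk_def nth_upt del: upt_Suc)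

lemma lex_lemma:
  assumes "length xs = length ys" "t < length xs" "\<forall>s<t. xs!s = ys!s" "xs!t < (ys!t :: nat)"
  shows "(xs, ys) \<in> lexord {(x,y). x < y}"
proof -
  have "take t xs = take t ys" using assms by (simp add: list_eq_iff_nth_eq)
  then show ?thesis using assms unfolding lexord_take_index_conv by auto
qed

lemma cnt0: "S \<subseteq> X \<Longrightarrow> cnt 0 S = 0"
proof -
  assume "S \<subseteq> X"
  then have "{e \<in> S. rk e \<le> 0} = {}" using X_rk by force
  then have "card {e \<in> S. rk e \<le> 0} = 0" by (simp only: card.empty)
  then show ?thesis unfolding cnt_def .
qed

lemma card_rk_eq:
  assumes "finite S" "1 \<le> j"
  shows "card {e \<in> S. rk e = j} = cnt j S - cnt (j-1) S" "cnt (j-1) S \<le> cnt j S"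
proof -
  have u: "{e \<in> S. rk e \<le> j} = {e \<in> S. rk e \<le> j - 1} \<union> {e \<in> S. rk e = j}" using assms(2) by auto
  have d: "{e \<in> S. rk e \<le> j - 1} \<inter> {e \<in> S. rk e = j} = {}" using assms(2) by auto
  have "cnt j S = cnt (j-1) S + card {e \<in> S. rk e = j}"
    unfolding cnt_def u using card_Un_disjoint[OF _ _ d] assms(1) by simp
  then show "card {e \<in> S. rk e = j} = cnt j S - cnt (j-1) S" "cnt (j-1) S \<le> cnt j S" by simp_all
qed

lemma no_better:
  assumes mS: "is_matching X S" and i: "1 \<le> i" "i \<le> r + 1"
    and eq: "\<forall>j. 1 \<le> j \<and> j < i \<longrightarrow> cnt j S = cnt j M" and lt: "cnt i M < cnt i S"
  shows False
proof -
  have SX: "S \<subseteq> X" using mS by (simp add: is_matching_def)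
  have fS: "finite S" using SX fX finite_subset by blast
  have eq': "cnt j S = cnt j M" if "j < i" for j
  proof (cases "j = 0")
    case True then show ?thesis using cnt0 SX M_X by simp
  next
    case False then show ?thesis using eq that by simp
  qed
  let ?s = "signature rank r M" and ?t = "signature rank r S"
  have "(?s, ?t) \<in> lexord {(x,y). x < y}"
  proof (rule lex_lemma[where t = "i - 1"])
    show "length ?s = length ?t" by (simp add: sig_len)
    show "i - 1 < length ?s" using i by (simp add: sig_len)
    show "\<forall>s<i - 1. ?s ! s = ?t ! s"
    proof (intro allI impI)
      fix s assume s: "s < i - 1"
      have "?s ! s = cnt (Suc s) M - cnt s M" using sig_nth[of s M] s i card_rk_eq[OF finM, of "Suc s"] by simp
      moreover have "?t ! s = cnt (Suc s) S - cnt s S" using sig_nth[of s S] s i card_rk_eq[OF fS, of "Suc s"] by simp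
      moreover have "cnt (Suc s) S = cnt (Suc s) M" "cnt s S = cnt s M" using eq' s by auto
      ultimately show "?s ! s = ?t ! s" by simp
    qed
    have "?s ! (i-1) = cnt i M - cnt (i-1) M" using sig_nth[of "i-1" M] i card_rk_eq[OF finM, of i] by simp
    moreover have "?t ! (i-1) = cnt i S - cnt (i-1) S" using sig_nth[of "i-1" S] i card_rk_eq[OF fS, of i] by simp
    moreover have "cnt (i-1) S = cnt (i-1) M" using eq' i by simp
    moreover have "cnt (i-1) M \<le> cnt i M" using card_rk_eq(2)[OF finM i(1)] .
    ultimately show "?s ! (i-1) < ?t ! (i-1)" using lt by linarith
  qed
  then show False using rm mS unfolding rank_maximal_def by blast
qed


lemma covered_mono: "N \<subseteq> N' \<Longrightarrow> covered N v \<Longrightarrow> covered N' v"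
  unfolding covered_def using adj_mono by blast

lemma OU_eq: "OU j = odd_vs V (G j) \<union> unr_vs V (G j)" by (simp add: OU_def Ocl_def Ucl_def)
lemma J_eq: "J e j = joins_OU e (odd_vs V (G j)) (unr_vs V (G j))" by (simp add: J_def Ocl_def Ucl_def)

lemma cnt_Nm: "cnt i M = card (Nm i)" by (simp add: cnt_def Nm_def)

lemma INV: "1 \<le> i \<Longrightarrow> i \<le> r + 1 \<Longrightarrow> Nm i \<subseteq> G i \<and> max_matching (G i) (Nm i)"
proof (induction i rule: less_induct)
  case (less i)
  have IH: "Nm j \<subseteq> G j \<and> max_matching (G j) (Nm j)" if "1 \<le> j" "j < i" for j
    using less that by auto
  have IHc: "cls V (G j) (Nm j)" if "1 \<le> j" "j < i" for j
    using IH[OF that] clsG that by blast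
  have sub: "Nm i \<subseteq> G i"
  proof
    fix e assume e: "e \<in> Nm i"
    have eM: "e \<in> M" and ri: "rk e \<le> i" using e by (auto simp: Nm_def)
    have c1: "\<not> incident e (OU j)" if j: "1 \<le> j" "j < rk e" for j
    proof
      assume "incident e (OU j)"
      then obtain v where v: "v \<in> OU j" "inc e v" using incident_iff by blast
      have ji: "j < i" using j ri by simp
      have "covered (Nm j) v" using cls.cov_OU[OF IHc[OF j(1) ji]] v(1) OU_eq by blast
      then obtain f where f: "f \<in> Nm j" "inc f v" using covered_iff by blast
      have "f \<in> M" "rk f \<le> j" using f by (auto simp: Nm_def)
      then have "e = f" using match_inc_eq[OF M_match eM _ v(2) f(2)] by blast
      then show False using \<open>rk f \<le> j\<close> j by simp
    qed
    have c2: "\<not> J e j" if j: "rk e \<le> j" "j < i" for j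
    proof -
      have j1: "1 \<le> j" using j X_rk[of e] M_X eM by auto
      have "e \<in> Nm j" using eM j by (simp add: Nm_def)
      then show ?thesis using cls.match_nojoin[OF IHc[OF j1 j(2)]] J_eq by blast
    qed
    show "e \<in> G i" using Gp_char[of i e] less.prems(1) M_X eM ri c1 c2 by blast
  qed
  have mtc: "is_matching (G i) (Nm i)"
    using match_mono[OF match_sub[OF M_match] sub] by (auto simp: Nm_def)
  have finNm: "finite (Nm i)" using finM by (simp add: Nm_def)
  have mx: "max_matching (G i) (Nm i)"
    unfolding max_matching_def
  proof (intro conjI allI impI mtc)
    fix K assume mK: "is_matching (G i) K"
    show "card K \<le> card (Nm i)"
    proof (rule ccontr)
      assume "\<not> card K \<le> card (Nm i)"
      then have lt: "card (Nm i) < card K" by simp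
      obtain xs where xs: "alt_path (G i) (Nm i) xs" "odd (length xs - 1)" "\<not> covered (Nm i) (last xs)"
        using berge[OF finG[OF less.prems(1)] mtc mK lt] by blast
      have lst: "odd (length xs - 1) \<longrightarrow> \<not> covered (Nm i) (last xs)" using xs by simp
      note sp = swp_props[OF mtc finNm xs(1) lst]
      define N' where "N' = swp (Nm i) xs"
      have mN': "is_matching (G i) N'" using sp(1) by (simp add: N'_def)
      have o1: "(length xs - 1) mod 2 = 1" using xs(2) by presburger
      have cN': "card N' = card (Nm i) + 1" using sp(2) o1 by (simp add: N'_def)
      have cov: "covered N' v" if "covered (Nm i) v" for v using sp(4)[OF xs(2) that] by (simp add: N'_def)
      have N'G: "N' \<subseteq> G i" using mN' by (simp add: is_matching_def)
      have mX: "is_matching X N'" using match_mono[OF mN'] N'G G_X[OF less.prems(1)] by blast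
      have ciN: "cnt i N' = card N'"
      proof -
        have "{e \<in> N'. rk e \<le> i} = N'" using N'G G_rk[OF less.prems(1)] by auto
        then show ?thesis by (simp add: cnt_def)
      qed
      have eq: "cnt j N' = cnt j M" if j: "1 \<le> j" "j < i" for j
      proof -
        define Kj where "Kj = {e \<in> N'. rk e \<le> j}"
        have KjG: "Kj \<subseteq> G j"
        proof
          fix e assume "e \<in> Kj"
          then have "e \<in> G i" "rk e \<le> j" using N'G by (auto simp: Kj_def)
          then show "e \<in> G j" using G_down[of j i e] j by simp
        qed
        have mKj: "is_matching (G j) Kj" using match_mono[OF match_sub[OF mN'] KjG] by (auto simp: Kj_def)
        have nj: "\<forall>e\<in>Kj. \<not> joins_OU e (odd_vs V (G j)) (unr_vs V (G j))"
          using G_noJ J_eq N'G j(2) unfolding Kj_def by auto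
        have cvK: "\<forall>v \<in> odd_vs V (G j) \<union> unr_vs V (G j). covered Kj v"
        proof
          fix v assume v: "v \<in> odd_vs V (G j) \<union> unr_vs V (G j)"
          have "covered (Nm j) v" using cls.cov_OU[OF IHc[OF j]] v by blast
          moreover have "Nm j \<subseteq> Nm i" using j by (auto simp: Nm_def)
          ultimately have "covered N' v" using cov covered_mono by blast
          then obtain f where f: "f \<in> N'" "inc f v" using covered_iff by blast
          have "rk f \<le> j"
          proof (rule ccontr)
            assume "\<not> rk f \<le> j"
            then have "\<not> incident f (OU j)" using G_noinc[of f i j] f(1) N'G less.prems(1) j(1) by auto
            moreover have "incident f (OU j)" using f(2) v OU_eq incident_iff by blast
            ultimately show False by simp
          qed
          then have "f \<in> Kj" using f(1) by (simp add: Kj_def)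
          then show "covered Kj v" using f(2) covered_iff by blast
        qed
        have le1: "card (Nm j) \<le> card Kj" using cls.count_le[OF IHc[OF j] mKj nj cvK] .
        have le2: "card Kj \<le> card (Nm j)" using IH[OF j] mKj unfolding max_matching_def by blast
        show ?thesis using le1 le2 cnt_Nm[of j] unfolding cnt_def Kj_def by simp
      qed
      have "cnt i M < cnt i N'" using ciN cN' cnt_Nm by simp
      then show False using no_better[OF mX less.prems(1,2)] eq by blast
    qed
  qed
  show ?case using sub mx by blast
qed


lemma Nm_all: "Nm (r+1) = M" using M_X X_rk by (auto simp: Nm_def)

lemma M_G: "M \<subseteq> G (r+1)" "max_matching (G (r+1)) M"
  using INV[of "r+1"] Nm_all by auto

lemma clsR: "cls V (G (r+1)) M" using clsG M_G by simp

lemma M_red: "M \<subseteq> reduced A P E rank r"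
proof
  fix e assume e: "e \<in> M"
  have "\<not> J e (r+1)" using cls.match_nojoin[OF clsR e] J_eq by simp
  then show "e \<in> reduced A P E rank r" using red_eq M_G(1) e by auto
qed

lemma Inr_X: "(a', Inr a) \<in> X \<Longrightarrow> a' = a" unfolding xedges_def by auto
lemma inX_lr: "a \<in> A \<Longrightarrow> (a, Inr a) \<in> X" unfolding xedges_def by auto
lemma rk_lr: "rk (a, Inr a') = r + 1" by (simp add: rk_def xrank_def)

lemma APM: "a \<in> A \<Longrightarrow> \<exists>q. (a,q) \<in> M"
proof (rule ccontr)
  assume a: "a \<in> A" and n: "\<not> (\<exists>q. (a,q) \<in> M)"
  define M' where "M' = insert (a, Inr a) M"
  have nI: "(a', Inr a) \<notin> M" for a'
  proof
    assume "(a', Inr a) \<in> M"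
    then have "a' = a" using M_X Inr_X by blast
    then show False using n \<open>(a', Inr a) \<in> M\<close> by blast
  qed
  have mX: "is_matching X M'"
    using M_match a n nI inX_lr unfolding is_matching_def M'_def by auto
  have notin: "(a, Inr a) \<notin> M" using nI by blast
  have eq: "cnt j M' = cnt j M" if "1 \<le> j \<and> j < r + 1" for j
  proof -
    have "{e \<in> M'. rk e \<le> j} = {e \<in> M. rk e \<le> j}" using that rk_lr[of a a] unfolding M'_def by auto
    then show ?thesis by (simp add: cnt_def)
  qed
  have "{e \<in> M'. rk e \<le> r + 1} = M'" "{e \<in> M. rk e \<le> r + 1} = M"
    using M_X X_rk rk_lr[of a a] unfolding M'_def by auto
  then have "cnt (r+1) M' = card M + 1" "cnt (r+1) M = card M"
    using finM notin unfolding cnt_def M'_def by auto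
  then show False using no_better[OF mX _ _ _] eq by fastforce
qed

lemma fst_M: "fst ` M = A"
proof
  show "fst ` M \<subseteq> A" using M_X X_mem by auto
  show "A \<subseteq> fst ` M" using APM by force
qed

lemma cover_all: "max_matching (G (r+1)) K \<Longrightarrow> a \<in> A \<Longrightarrow> covered K (Ap a)"
proof -
  assume K: "max_matching (G (r+1)) K" and a: "a \<in> A"
  have mK: "is_matching (G (r+1)) K" using K max_match by blast
  have "card K \<le> card M" "card M \<le> card K" using K M_G(2) max_match unfolding max_matching_def by blast+
  then have cK: "card K = card A" using card_image[OF inj_fst_match[OF M_match]] fst_M by simp
  have KX: "K \<subseteq> X" using mK G_X[of "r+1"] by (auto simp: is_matching_def)
  have sub: "fst ` K \<subseteq> A" using KX X_mem by auto
  have "card (fst ` K) = card A" using card_image[OF inj_fst_match[OF mK]] cK by simp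
  then have "fst ` K = A" using card_subset_eq[OF finA sub] by simp
  then obtain e where "e \<in> K" "fst e = a" using a by force
  then show ?thesis unfolding covered_iff inc_def by blast
qed

lemma ApV: "Ap a \<in> V \<Longrightarrow> a \<in> A" unfolding verts_def by auto
lemma PoV: "Po q \<in> V \<longleftrightarrow> q \<in> posts A P" unfolding verts_def by auto
lemma ApV': "a \<in> A \<Longrightarrow> Ap a \<in> V" unfolding verts_def by auto

lemma hdA:
  assumes xs: "alt_path (G (r+1)) M xs" and a: "isA (xs!0)" and c: "xs!0 \<in> V \<or> 1 < length xs"
  shows False
proof -
  obtain a0 where a0: "xs!0 = Ap a0" using a by (cases "xs!0") auto
  have "a0 \<in> A"
  proof (cases "xs!0 \<in> V")
    case True then show ?thesis using a0 ApV by simp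
  next
    case False
    then have "Suc 0 < length xs" using c by simp
    then have "adj (G (r+1)) (xs!0) (xs!Suc 0)" using xs by (simp add: alt_path_def)
    then obtain q where "(a0, q) \<in> G (r+1)" using a0 by (auto simp: adj_def)
    then show ?thesis using G_X[of "r+1"] X_mem by auto
  qed
  then have "covered M (xs!0)" using cover_all[OF M_G(2)] a0 by simp
  then show False using xs by (auto simp: alt_path_def hd_conv_nth)
qed

lemma noEA: "Ap a \<notin> Ec (r+1)"
proof
  assume e: "Ap a \<in> Ec (r+1)"
  then have "EP (G (r+1)) M (Ap a)" "Ap a \<in> V" using cls.E_iff[OF clsR] Ec_eq by auto
  then obtain xs where xs: "alt_path (G (r+1)) M xs" "last xs = Ap a" "even (length xs - 1)" by (auto simp: EP_def)
  have ne: "xs \<noteq> []" using xs by (simp add: alt_path_def)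
  have L: "length xs - 1 < length xs" using ne by simp
  have "isA (xs ! (length xs - 1)) = (isA (xs!0) = even (length xs - 1))" using ap_parity[OF xs(1) L] .
  moreover have "xs ! (length xs - 1) = Ap a" using xs(2) ne by (simp add: last_conv_nth)
  ultimately have iA: "isA (xs!0)" using xs(3) by simp
  have "xs!0 \<in> V \<or> 1 < length xs"
  proof (cases "length xs = 1")
    case True then have "xs!0 = Ap a" using xs(2) ne by (simp add: last_conv_nth)
    then show ?thesis using \<open>Ap a \<in> V\<close> by simp
  next
    case False
    have "0 < length xs" using ne by simp
    then show ?thesis using False by linarith
  qed
  then show False using hdA[OF xs(1) iA] by blast
qed

lemma noOP: "Po p \<notin> Oc (r+1)"
proof
  assume o: "Po p \<in> Oc (r+1)"
  then have "OP (G (r+1)) M (Po p)" using cls.O_iff[OF clsR] Oc_eq by auto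
  then obtain xs where xs: "alt_path (G (r+1)) M xs" "last xs = Po p" "odd (length xs - 1)" by (auto simp: OP_def)
  have ne: "xs \<noteq> []" using xs by (simp add: alt_path_def)
  have L: "length xs - 1 < length xs" using ne by simp
  have "isA (xs ! (length xs - 1)) = (isA (xs!0) = even (length xs - 1))" using ap_parity[OF xs(1) L] .
  moreover have "xs ! (length xs - 1) = Po p" using xs(2) ne by (simp add: last_conv_nth)
  ultimately have iA: "isA (xs!0)" using xs(3) by simp
  have "1 < length xs" using xs(3) by presburger
  then show False using hdA[OF xs(1) iA] by blast
qed

lemma part1:
  assumes p: "p \<in> posts A P" and n: "\<nexists>a. (a, p) \<in> M"
  shows "(\<forall>i \<in> {1..r + 1}. Po p \<in> Ec i) \<and> is_sink A P E rank r M p"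
proof -
  have E: "Po p \<in> Ec i" if i: "i \<in> {1..r+1}" for i
  proof -
    have c: "cls V (G i) (Nm i)" using INV[of i] clsG i by auto
    have "\<not> covered (Nm i) (Po p)"
    proof
      assume "covered (Nm i) (Po p)"
      then obtain e where "e \<in> Nm i" "inc e (Po p)" using covered_iff by blast
      then have "(fst e, p) \<in> M" by (auto simp: Nm_def inc_def)
      then show False using n by blast
    qed
    then show ?thesis using cls.uncov_E[OF c] PoV p Ec_eq by blast
  qed
  moreover have "\<not> (\<exists>q'. sw_edge (reduced A P E rank r) M p q')" using n by (auto simp: sw_edge_def)
  ultimately show ?thesis using p unfolding is_sink_def by blast
qed


abbreviation "RED \<equiv> reduced A P E rank r"
abbreviation "REL \<equiv> undirected_rel A P E rank r M"

lemma EP_prefix: "alt_path F N xs \<Longrightarrow> j < length xs \<Longrightarrow> even j \<Longrightarrow> EP F N (xs!j)"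
proof -
  assume a: "alt_path F N xs" "j < length xs" "even j"
  have "alt_path F N (take (Suc j) xs)" "last (take (Suc j) xs) = xs!j"
    using alt_path_take[OF a(1), of "Suc j"] a(2) by auto
  moreover have "length (take (Suc j) xs) - 1 = j" using a(2) by simp
  ultimately show ?thesis unfolding EP_def using a(3) by metis
qed

lemma noJ_E: "Po y \<in> Ec (r+1) \<Longrightarrow> \<not> J (b,y) (r+1)"
proof
  assume e: "Po y \<in> Ec (r+1)" and j: "J (b,y) (r+1)"
  then have "Po y \<in> Oc (r+1) \<union> Uc (r+1)" unfolding J_def joins_OU_def by auto
  then show False using e cls.EO[OF clsR] Ec_eq Oc_eq Uc_eq unfolding unr_vs_def by auto
qed

lemma E_V: "v \<in> Ec i \<Longrightarrow> v \<in> V" by (simp add: Ecl_def even_vs_def)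

lemma sink_unmatched: "is_sink A P E rank r M q \<Longrightarrow> \<not> (\<exists>a. (a,q) \<in> M)"
proof
  assume sk: "is_sink A P E rank r M q" and "\<exists>a. (a,q) \<in> M"
  then obtain b where b: "(b,q) \<in> M" by blast
  have Eq: "Po q \<in> Ec (r+1)" using sk unfolding is_sink_def by auto
  then have "EP (G (r+1)) M (Po q)" using cls.E_iff[OF clsR] Ec_eq by auto
  then obtain xs where xs: "alt_path (G (r+1)) M xs" "last xs = Po q" "even (length xs - 1)" by (auto simp: EP_def)
  have ne: "xs \<noteq> []" using xs by (simp add: alt_path_def)
  define L where "L = length xs - 1"
  have Ll: "L < length xs" using ne by (simp add: L_def)
  have lx: "xs!L = Po q" using xs(2) ne by (simp add: last_conv_nth L_def)
  have cq: "covered M (Po q)" using b unfolding covered_iff inc_def by force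
  have "L \<noteq> 0"
  proof
    assume "L = 0"
    then have "hd xs = Po q" using lx ne by (simp add: hd_conv_nth)
    then show False using cq xs(1) by (simp add: alt_path_def)
  qed
  then obtain t where t: "L = Suc (Suc t)" using xs(3) unfolding L_def by (metis even_Suc odd_one not0_implies_Suc One_nat_def)
  have "adj M (xs!Suc t) (xs!Suc (Suc t))" using ap_adjN[OF xs(1), of "Suc t"] t Ll xs(3) L_def by simp
  then have "adj M (xs!Suc t) (Po q)" using lx t by simp
  then obtain b' where b': "xs!Suc t = Ap b'" "(b',q) \<in> M" by (auto simp: adj_def)
  have "adj (G (r+1)) (xs!t) (xs!Suc t)" using ap_adjF[OF xs(1), of t] t Ll by simp
  then obtain y where y: "xs!t = Po y" "(b',y) \<in> G (r+1)" using b' by (auto simp: adj_def)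
  have "EP (G (r+1)) M (xs!t)" using EP_prefix[OF xs(1), of t] t Ll xs(3) L_def by simp
  moreover have "Po y \<in> V" using y(2) vokX[OF G_X[of "r+1"]] by (auto simp: vok_def)
  ultimately have Ey: "Po y \<in> Ec (r+1)" using cls.E_iff[OF clsR] Ec_eq y(1) by auto
  have "(b',y) \<in> RED" using noJ_E[OF Ey] y(2) red_eq by auto
  moreover have "y \<noteq> q"
  proof
    assume "y = q"
    then have "xs!t = xs!L" using y lx by simp
    then show False using distinct_idx[of xs t L] xs(1) Ll t by (simp add: alt_path_def)
  qed
  ultimately have "sw_edge RED M q y" using b'(2) unfolding sw_edge_def by auto
  then show False using sk unfolding is_sink_def by blast
qed

lemma swE: "sw_edge RED M x y \<Longrightarrow> (Po x \<in> Ec (r+1) \<longleftrightarrow> Po y \<in> Ec (r+1))"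
proof -
  assume "sw_edge RED M x y"
  then obtain a where a: "(a,x) \<in> M" "(a,y) \<in> RED" by (auto simp: sw_edge_def)
  have aF: "(a,y) \<in> G (r+1)" "\<not> J (a,y) (r+1)" using a(2) red_eq by auto
  have V: "Ap a \<in> V" using a(1) M_X X_mem ApV' by blast
  have nE: "Ap a \<notin> Ec (r+1)" by (rule noEA)
  note mc = cls.match_class[OF clsR a(1)]
  note ec = cls.edge_class[OF clsR aF(1)]
  have nj: "\<not> joins_OU (a,y) (odd_vs V (G (r+1))) (unr_vs V (G (r+1)))" using aF(2) J_eq by simp
  have EO1: "v \<in> even_vs V (G (r+1)) \<Longrightarrow> v \<notin> odd_vs V (G (r+1))" for v using cls.EO[OF clsR] by blast
  show ?thesis
  proof (cases "Ap a \<in> odd_vs V (G (r+1))")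
    case True
    have "Po x \<in> even_vs V (G (r+1))" using mc(2) True by blast
    moreover have "Po y \<in> even_vs V (G (r+1))"
      using ec[OF nj] True nE Ec_eq unfolding unr_vs_def by auto
    ultimately show ?thesis using Ec_eq by simp
  next
    case False
    then have U: "Ap a \<in> unr_vs V (G (r+1))" using V nE Ec_eq unfolding unr_vs_def by auto
    have "Po x \<notin> even_vs V (G (r+1))" using mc(2) False by blast
    moreover have "Po y \<notin> even_vs V (G (r+1))"
      using ec[OF nj] False nE Ec_eq U unfolding unr_vs_def by auto
    ultimately show ?thesis using Ec_eq by simp
  qed
qed

lemma sink_E: "is_sink A P E rank r M s \<Longrightarrow> Po s \<in> Ec (r+1)"
  unfolding is_sink_def by auto

lemma part2a:
  assumes p: "p \<in> posts A P"
  shows "in_sink_comp A P E rank r M p \<longleftrightarrow> Po p \<in> Ec (r+1)"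
proof
  assume "in_sink_comp A P E rank r M p"
  then obtain s where s: "is_sink A P E rank r M s" "(p, s) \<in> REL\<^sup>*" unfolding in_sink_comp_def by blast
  show "Po p \<in> Ec (r+1)"
    using s(2)
  proof (induction rule: converse_rtrancl_induct)
    case base then show ?case using sink_E[OF s(1)] .
  next
    case (step x y)
    then show ?case using swE unfolding undirected_rel_def by blast
  qed
next
  assume Ep: "Po p \<in> Ec (r+1)"
  then have "EP (G (r+1)) M (Po p)" using cls.E_iff[OF clsR] Ec_eq by auto
  then obtain xs where xs: "alt_path (G (r+1)) M xs" "last xs = Po p" "even (length xs - 1)" by (auto simp: EP_def)
  have ne: "xs \<noteq> []" using xs by (simp add: alt_path_def)
  define L where "L = length xs - 1"
  have Ll: "L < length xs" using ne by (simp add: L_def)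
  have lx: "xs!L = Po p" using xs(2) ne by (simp add: last_conv_nth L_def)
  have par: "isA (xs!j) = (isA (xs!0) = even j)" if "j < length xs" for j using ap_parity[OF xs(1) that] .
  have h0: "\<not> isA (xs!0)" using par[OF Ll] lx xs(3) L_def by simp
  then obtain s0 where s0: "xs!0 = Po s0" by (cases "xs!0") auto
  have evP: "\<exists>q. xs!j = Po q" if "j < length xs" "even j" for j
    using par[OF that(1)] that(2) h0 by (cases "xs!j") auto
  have key: "\<forall>q. xs!(2*m) = Po q \<longrightarrow> (q, s0) \<in> REL\<^sup>*" if "2*m \<le> L" for m
    using that
  proof (induction m)
    case 0 then show ?case using s0 by simp
  next
    case (Suc m)
    have lt: "2*m + 2 \<le> L" using Suc.prems by simp
    obtain q' where q': "xs!(2*m) = Po q'" using evP[of "2*m"] lt Ll by auto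
    have ih: "(q', s0) \<in> REL\<^sup>*" using Suc.IH lt q' by simp
    show ?case
    proof (intro allI impI)
      fix q assume q: "xs!(2 * Suc m) = Po q"
      have i1: "Suc (Suc (2*m)) < length xs" using lt Ll by simp
      have "adj M (xs!Suc (2*m)) (xs!Suc (Suc (2*m)))" using ap_adjN[OF xs(1) i1] by simp
      then have "adj M (xs!Suc (2*m)) (Po q)" using q by simp
      then obtain b where b: "xs!Suc (2*m) = Ap b" "(b,q) \<in> M" by (auto simp: adj_def)
      have "adj (G (r+1)) (xs!(2*m)) (xs!Suc (2*m))" using ap_adjF[OF xs(1)] i1 by simp
      then have bq': "(b,q') \<in> G (r+1)" using b q' by (auto simp: adj_def)
      have "EP (G (r+1)) M (xs!(2*m))" using EP_prefix[OF xs(1), of "2*m"] i1 by simp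
      moreover have "Po q' \<in> V" using bq' vokX[OF G_X[of "r+1"]] by (auto simp: vok_def)
      ultimately have Eq': "Po q' \<in> Ec (r+1)" using cls.E_iff[OF clsR] Ec_eq q' by auto
      have "(b,q') \<in> RED" using noJ_E[OF Eq'] bq' red_eq by auto
      moreover have "q \<noteq> q'"
      proof
        assume "q = q'"
        then have "xs!(2*m) = xs!(Suc (Suc (2*m)))" using q q' by simp
        then show False using distinct_idx[of xs "2*m" "Suc (Suc (2*m))"] xs(1) i1 by (simp add: alt_path_def)
      qed
      ultimately have "sw_edge RED M q q'" using b(2) unfolding sw_edge_def by auto
      then have "(q, q') \<in> REL" unfolding undirected_rel_def by auto
      then show "(q, s0) \<in> REL\<^sup>*" using ih by (rule converse_rtrancl_into_rtrancl)
    qed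
  qed
  obtain m where m: "L = 2*m" using xs(3) L_def by (metis evenE)
  have reach: "(p, s0) \<in> REL\<^sup>*" using key[of m] m lx by simp
  have s0post: "s0 \<in> posts A P"
  proof (cases "L = 0")
    case True then show ?thesis using lx s0 p by simp
  next
    case False
    then have "Suc 0 < length xs" using Ll by simp
    then have "adj (G (r+1)) (xs!0) (xs!Suc 0)" using ap_adjF[OF xs(1)] by simp
    then obtain b where "(b, s0) \<in> G (r+1)" using s0 by (auto simp: adj_def)
    then show ?thesis using G_X[of "r+1"] X_mem by auto
  qed
  have "\<nexists>a. (a, s0) \<in> M"
  proof
    assume "\<exists>a. (a, s0) \<in> M"
    then have "covered M (Po s0)" unfolding covered_iff inc_def by force
    then show False using xs(1) s0 ne by (simp add: alt_path_def hd_conv_nth)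
  qed
  then have "is_sink A P E rank r M s0" using part1 s0post by blast
  then show "in_sink_comp A P E rank r M p" unfolding in_sink_comp_def using p reach by blast
qed

lemma part2b:
  assumes p: "p \<in> posts A P"
  shows "in_nonsink_comp A P E rank r M p \<longleftrightarrow> Po p \<in> Uc (r+1)"
proof -
  have "in_nonsink_comp A P E rank r M p \<longleftrightarrow> \<not> in_sink_comp A P E rank r M p"
    using p unfolding in_nonsink_comp_def in_sink_comp_def by blast
  also have "\<dots> \<longleftrightarrow> Po p \<notin> Ec (r+1)" using part2a[OF p] by simp
  also have "\<dots> \<longleftrightarrow> Po p \<in> Uc (r+1)"
    using noOP[of p] PoV[of p] p unfolding Ecl_def Ocl_def Ucl_def unr_vs_def by auto
  finally show ?thesis .
qed


context
  fixes T :: "('p + 'a) list"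
  assumes T: "dpath (posts A P) RED M T" and skT: "is_sink A P E rank r M (last T)"
begin

definition "mm = length T - 1"
definition "aa j = (THE a. (a, T!j) \<in> M)"
definition "old j = (aa j, T!j)"
definition "new j = (aa j, T!Suc j)"
definition "Old = old ` {..<mm}"
definition "New = new ` {..<mm}"
definition "RR = M - Old"
definition "MT = RR \<union> New"

lemma Tne: "T \<noteq> []" and Tdist: "distinct T" and Tpost: "set T \<subseteq> posts A P"
  using T unfolding dpath_def by auto

lemma mm_lt: "mm < length T" using Tne by (simp add: mm_def)
lemma lastT: "last T = T!mm" using Tne by (simp add: mm_def last_conv_nth)

lemma Tidx: "i < length T \<Longrightarrow> j < length T \<Longrightarrow> T!i = T!j \<Longrightarrow> i = j"
  using Tdist nth_eq_iff_index_eq by blast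

lemma aa_props: "j < mm \<Longrightarrow> (aa j, T!j) \<in> M \<and> (aa j, T!Suc j) \<in> RED"
proof -
  assume j: "j < mm"
  then have "sw_edge RED M (T!j) (T!Suc j)" using T mm_lt unfolding dpath_def mm_def by auto
  then obtain a where a: "(a, T!j) \<in> M" "(a, T!Suc j) \<in> RED" by (auto simp: sw_edge_def)
  have "aa j = a" unfolding aa_def
  proof (rule the_equality)
    show "(a, T!j) \<in> M" by (rule a(1))
    fix a' assume "(a', T!j) \<in> M"
    then show "a' = a" using M_match a(1) unfolding is_matching_def by blast
  qed
  then show ?thesis using a by simp
qed

lemma old_M: "j < mm \<Longrightarrow> old j \<in> M" using aa_props by (simp add: old_def)
lemma new_R: "j < mm \<Longrightarrow> new j \<in> RED" using aa_props by (simp add: new_def)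
lemma new_X: "j < mm \<Longrightarrow> new j \<in> X" using new_R red_X by blast

lemma last_unm: "\<not> (\<exists>a. (a, T!mm) \<in> M)" using sink_unmatched[OF skT] lastT by simp

lemma inj_old: "inj_on old {..<mm}"
  unfolding inj_on_def old_def using Tidx mm_lt by auto
lemma inj_new: "inj_on new {..<mm}"
proof (rule inj_onI)
  fix x y assume xy: "x \<in> {..<mm}" "y \<in> {..<mm}" "new x = new y"
  then have "T!Suc x = T!Suc y" by (simp add: new_def)
  moreover have "Suc x < length T" "Suc y < length T" using xy(1,2) mm_lt by auto
  ultimately show "x = y" using Tidx[of "Suc x" "Suc y"] by simp
qed

lemma new_notM: "j < mm \<Longrightarrow> new j \<notin> M"
proof
  assume j: "j < mm" and n: "new j \<in> M"
  have "(aa j, T!j) \<in> M" "(aa j, T!Suc j) \<in> M" using aa_props[OF j] n by (auto simp: new_def)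
  then have "T!j = T!Suc j" using M_match unfolding is_matching_def by blast
  then show False using Tidx[of j "Suc j"] j mm_lt by simp
qed

lemma MT_match: "is_matching RED MT"
  unfolding is_matching_def
proof (intro conjI allI impI)
  show "MT \<subseteq> RED" using M_red new_R unfolding MT_def RR_def New_def by auto
next
  fix a q q' assume a: "(a,q) \<in> MT" "(a,q') \<in> MT"
  have c1: "q = q'" if h: "(a,q) \<in> RR" "(a,q') \<in> New" for q q'
  proof -
    obtain j where j: "j < mm" "(a,q') = new j" using h(2) unfolding New_def by auto
    have "(a, T!j) \<in> M" using aa_props[OF j(1)] j(2) by (auto simp: new_def)
    moreover have "(a,q) \<in> M" using h(1) by (simp add: RR_def)
    ultimately have "q = T!j" using M_match unfolding is_matching_def by blast
    then have "(a,q) = old j" using j(2) by (auto simp: old_def new_def)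
    then show ?thesis using h(1) j(1) unfolding RR_def Old_def by auto
  qed
  have c2: "q = q'" if h: "(a,q) \<in> New" "(a,q') \<in> New" for q q'
  proof -
    obtain i where i: "i < mm" "(a,q) = new i" using h(1) unfolding New_def by auto
    obtain j where j: "j < mm" "(a,q') = new j" using h(2) unfolding New_def by auto
    have "(a, T!i) \<in> M" "(a, T!j) \<in> M" using aa_props[OF i(1)] aa_props[OF j(1)] i(2) j(2) by (auto simp: new_def)
    then have "T!i = T!j" using M_match unfolding is_matching_def by blast
    then have "i = j" using Tidx i(1) j(1) mm_lt by simp
    then show ?thesis using i j by (auto simp: new_def)
  qed
  show "q = q'"
  proof (cases "(a,q) \<in> New")
    case True
    then show ?thesis using a c1 c2 unfolding MT_def by blast
  next
    case False
    then have "(a,q) \<in> RR" using a(1) unfolding MT_def by blast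
    then show ?thesis using a(2) c1 unfolding MT_def RR_def
      using M_match unfolding is_matching_def by blast
  qed
next
  fix a a' q assume a: "(a,q) \<in> MT" "(a',q) \<in> MT"
  have c1: "a = a'" if h: "(a,q) \<in> RR" "(a',q) \<in> New" for a a'
  proof -
    obtain j where j: "j < mm" "(a',q) = new j" using h(2) unfolding New_def by auto
    have qj: "q = T!Suc j" using j(2) by (simp add: new_def)
    have aM: "(a,q) \<in> M" using h(1) by (simp add: RR_def)
    show ?thesis
    proof (cases "Suc j < mm")
      case True
      have "(aa (Suc j), T!Suc j) \<in> M" using aa_props[OF True] by simp
      then have "a = aa (Suc j)" using aM qj M_match unfolding is_matching_def by blast
      then have "(a,q) = old (Suc j)" using qj by (simp add: old_def)
      then show ?thesis using h(1) True unfolding RR_def Old_def by auto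
    next
      case False
      then have "Suc j = mm" using j(1) by simp
      then show ?thesis using last_unm aM qj by auto
    qed
  qed
  have c2: "a = a'" if h: "(a,q) \<in> New" "(a',q) \<in> New" for a a'
  proof -
    obtain i where i: "i < mm" "(a,q) = new i" using h(1) unfolding New_def by auto
    obtain j where j: "j < mm" "(a',q) = new j" using h(2) unfolding New_def by auto
    have "T!Suc i = T!Suc j" using i(2) j(2) by (simp add: new_def)
    then have "i = j" using Tidx[of "Suc i" "Suc j"] i(1) j(1) mm_lt by simp
    then show ?thesis using i j by (simp add: new_def)
  qed
  show "a = a'"
  proof (cases "(a,q) \<in> New")
    case True
    then show ?thesis using a c1 c2 unfolding MT_def by blast
  next
    case False
    then have "(a,q) \<in> RR" using a(1) unfolding MT_def by blast
    then show ?thesis using a(2) c1 unfolding MT_def RR_def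
      using M_match unfolding is_matching_def by blast
  qed
qed

lemma MT_red: "MT \<subseteq> RED" using MT_match by (simp add: is_matching_def)

lemma MT_uncov: "\<not> covered MT (Po (T!0))"
proof
  assume "covered MT (Po (T!0))"
  then obtain e where e: "e \<in> MT" "inc e (Po (T!0))" using covered_iff by blast
  show False
  proof (cases "e \<in> New")
    case True
    then obtain j where j: "j < mm" "e = new j" unfolding New_def by auto
    then have t0: "T!Suc j = T!0" using e(2) by (simp add: new_def inc_def)
    have "Suc j < length T" "0 < length T" using j(1) mm_lt by auto
    then show False using Tidx[of "Suc j" 0] t0 by simp
  next
    case False
    then have eR: "e \<in> RR" using e(1) unfolding MT_def by blast
    then have eM: "e \<in> M" by (simp add: RR_def)
    have sn: "snd e = T!0" using e(2) by (simp add: inc_def)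
    show False
    proof (cases "0 < mm")
      case True
      have "(aa 0, T!0) \<in> M" using aa_props[OF True] by simp
      then have "fst e = aa 0" using eM sn M_match unfolding is_matching_def by (metis prod.collapse)
      then have "e = old 0" using sn by (simp add: old_def prod_eq_iff)
      then show False using eR True unfolding RR_def Old_def by auto
    next
      case False
      then have "T!0 = T!mm" by simp
      then show False using last_unm eM sn by (metis prod.collapse)
    qed
  qed
qed


definition "co i = card {j. j < mm \<and> rk (old j) \<le> i}"
definition "cn i = card {j. j < mm \<and> rk (new j) \<le> i}"

lemma Old_M: "Old \<subseteq> M" using old_M unfolding Old_def by auto

lemma cnt_M: "cnt i M = card {e \<in> RR. rk e \<le> i} + co i"
proof -
  have u: "{e \<in> M. rk e \<le> i} = {e \<in> RR. rk e \<le> i} \<union> old ` {j. j < mm \<and> rk (old j) \<le> i}"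
    using Old_M unfolding RR_def Old_def by auto
  have d: "{e \<in> RR. rk e \<le> i} \<inter> old ` {j. j < mm \<and> rk (old j) \<le> i} = {}"
    unfolding RR_def Old_def by auto
  have f1: "finite {e \<in> RR. rk e \<le> i}" using finM unfolding RR_def by simp
  have inj: "inj_on old {j. j < mm \<and> rk (old j) \<le> i}" using inj_old by (rule inj_on_subset) auto
  have "card (old ` {j. j < mm \<and> rk (old j) \<le> i}) = co i" using card_image[OF inj] by (simp add: co_def)
  then show ?thesis unfolding cnt_def u using card_Un_disjoint[OF f1 _ d] by simp
qed

lemma cnt_MT: "cnt i MT = card {e \<in> RR. rk e \<le> i} + cn i"
proof -
  have u: "{e \<in> MT. rk e \<le> i} = {e \<in> RR. rk e \<le> i} \<union> new ` {j. j < mm \<and> rk (new j) \<le> i}"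
    unfolding MT_def New_def by auto
  have d: "{e \<in> RR. rk e \<le> i} \<inter> new ` {j. j < mm \<and> rk (new j) \<le> i} = {}"
    using new_notM unfolding RR_def by auto
  have f1: "finite {e \<in> RR. rk e \<le> i}" using finM unfolding RR_def by simp
  have inj: "inj_on new {j. j < mm \<and> rk (new j) \<le> i}" using inj_new by (rule inj_on_subset) auto
  have "card (new ` {j. j < mm \<and> rk (new j) \<le> i}) = cn i" using card_image[OF inj] by (simp add: cn_def)
  then show ?thesis unfolding cnt_def u using card_Un_disjoint[OF f1 _ d] by simp
qed

lemma co_top: "co (r+1) = mm"
proof -
  have "{j. j < mm \<and> rk (old j) \<le> r + 1} = {..<mm}" using old_M M_X X_rk by fastforce
  then show ?thesis by (simp add: co_def)
qed

lemma cn_top: "cn (r+1) = mm"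
proof -
  have "{j. j < mm \<and> rk (new j) \<le> r + 1} = {..<mm}" using new_X X_rk by fastforce
  then show ?thesis by (simp add: cn_def)
qed

lemma MT_X: "MT \<subseteq> X" using MT_red red_X by blast

lemma K_match: "1 \<le> i \<Longrightarrow> i \<le> r + 1 \<Longrightarrow> is_matching (G i) {e \<in> MT. rk e \<le> i}"
proof -
  assume i: "1 \<le> i" "i \<le> r + 1"
  have "{e \<in> MT. rk e \<le> i} \<subseteq> G i"
  proof
    fix e assume "e \<in> {e \<in> MT. rk e \<le> i}"
    then have "e \<in> RED" "rk e \<le> i" using MT_red by auto
    then show "e \<in> G i" using red_down[of e i] i by simp
  qed
  moreover have s1: "{e \<in> MT. rk e \<le> i} \<subseteq> MT" by auto
  ultimately show ?thesis using match_mono[OF match_sub[OF MT_match s1]] by simp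
qed

lemma D_nonneg: "1 \<le> i \<Longrightarrow> i \<le> r + 1 \<Longrightarrow> cn i \<le> co i"
proof -
  assume i: "1 \<le> i" "i \<le> r + 1"
  have "card {e \<in> MT. rk e \<le> i} \<le> card (Nm i)"
    using INV[OF i] K_match[OF i] unfolding max_matching_def by blast
  then have "cnt i MT \<le> cnt i M" using cnt_Nm by (simp add: cnt_def)
  then show ?thesis using cnt_M cnt_MT by simp
qed

lemma int_card_filter: "finite S \<Longrightarrow> int (card {x \<in> S. Q x}) = (\<Sum>x\<in>S. if Q x then 1 else 0)"
  using sum.inter_filter[of S "\<lambda>_. (1::int)" Q] by simp

lemma rk_count: "e \<in> X \<Longrightarrow> int (rk e) = int r + 1 - int (card {i \<in> {1..r}. rk e \<le> i})"
proof -
  assume e: "e \<in> X"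
  then have b: "1 \<le> rk e" "rk e \<le> r + 1" using X_rk by auto
  have "{i \<in> {1..r}. rk e \<le> i} = {rk e..r}" using b by auto
  then have "card {i \<in> {1..r}. rk e \<le> i} = Suc r - rk e" by simp
  then show ?thesis using b by simp
qed

lemma weight_eq: "path_weight (xrank rank r) M T = (\<Sum>j<mm. int (rk (new j)) - int (rk (old j)))"
proof -
  have "path_weight (xrank rank r) M T = (\<Sum>j<mm. sw_weight (xrank rank r) M (T!j) (T!Suc j))"
    by (simp add: path_weight_def mm_def)
  also have "\<dots> = (\<Sum>j<mm. int (rk (new j)) - int (rk (old j)))"
    by (rule sum.cong) (simp_all add: sw_weight_def Let_def aa_def[symmetric] rk_def new_def old_def)
  finally show ?thesis .
qed

lemma weight_sum: "path_weight (xrank rank r) M T = (\<Sum>i\<in>{1..r}. int (co i) - int (cn i))"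
proof -
  have "path_weight (xrank rank r) M T = (\<Sum>j<mm. int (rk (new j)) - int (rk (old j)))" by (rule weight_eq)
  also have "\<dots> = (\<Sum>j<mm. int (card {i \<in> {1..r}. rk (old j) \<le> i}) - int (card {i \<in> {1..r}. rk (new j) \<le> i}))"
  proof (rule sum.cong)
    fix j assume "j \<in> {..<mm}"
    then have "old j \<in> X" "new j \<in> X" using old_M M_X new_X by auto
    then show "int (rk (new j)) - int (rk (old j)) = int (card {i \<in> {1..r}. rk (old j) \<le> i}) - int (card {i \<in> {1..r}. rk (new j) \<le> i})"
      using rk_count by simp
  qed simp
  also have "\<dots> = (\<Sum>j<mm. \<Sum>i\<in>{1..r}. (if rk (old j) \<le> i then 1 else 0) - (if rk (new j) \<le> i then (1::int) else 0))"
  proof (rule sum.cong)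
    fix j
    have "int (card {i \<in> {1..r}. rk (old j) \<le> i}) = (\<Sum>i\<in>{1..r}. if rk (old j) \<le> i then 1 else 0)"
      using int_card_filter[of "{1..r}" "\<lambda>i. rk (old j) \<le> i"] by simp
    moreover have "int (card {i \<in> {1..r}. rk (new j) \<le> i}) = (\<Sum>i\<in>{1..r}. if rk (new j) \<le> i then 1 else 0)"
      using int_card_filter[of "{1..r}" "\<lambda>i. rk (new j) \<le> i"] by simp
    ultimately show "int (card {i \<in> {1..r}. rk (old j) \<le> i}) - int (card {i \<in> {1..r}. rk (new j) \<le> i}) =
      (\<Sum>i\<in>{1..r}. (if rk (old j) \<le> i then 1 else 0) - (if rk (new j) \<le> i then (1::int) else 0))"
      by (simp only: sum_subtractf)
  qed simp
  also have "\<dots> = (\<Sum>i\<in>{1..r}. \<Sum>j<mm. (if rk (old j) \<le> i then 1 else 0) - (if rk (new j) \<le> i then (1::int) else 0))"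
    by (rule sum.swap)
  also have "\<dots> = (\<Sum>i\<in>{1..r}. int (co i) - int (cn i))"
  proof (rule sum.cong)
    fix i
    have "int (co i) = (\<Sum>j<mm. if rk (old j) \<le> i then 1 else 0)"
      unfolding co_def using int_card_filter[of "{..<mm}" "\<lambda>j. rk (old j) \<le> i"] by (simp add: lessThan_def)
    moreover have "int (cn i) = (\<Sum>j<mm. if rk (new j) \<le> i then 1 else 0)"
      unfolding cn_def using int_card_filter[of "{..<mm}" "\<lambda>j. rk (new j) \<le> i"] by (simp add: lessThan_def)
    ultimately show "(\<Sum>j<mm. (if rk (old j) \<le> i then 1 else 0) - (if rk (new j) \<le> i then (1::int) else 0)) = int (co i) - int (cn i)"
      by (simp add: sum_subtractf)
  qed simp
  finally show ?thesis .
qed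


lemma part3: "path_weight (xrank rank r) M T = 0 \<longleftrightarrow> (\<forall>i\<in>{1..r+1}. Po (hd T) \<in> Ec i)"
proof -
  have hdT: "hd T = T!0" using Tne by (simp add: hd_conv_nth)
  have P0: "Po (T!0) \<in> V" using Tpost Tne PoV by (simp add: subset_iff)
  have Kmax: "max_matching (G i) {e \<in> MT. rk e \<le> i}" if i: "1 \<le> i" "i \<le> r + 1" and eq: "cn i = co i" for i
  proof -
    have "card {e \<in> MT. rk e \<le> i} = card (Nm i)" using cnt_M[of i] cnt_MT[of i] eq cnt_Nm[of i] by (simp add: cnt_def)
    then show ?thesis using INV[OF i] K_match[OF i] unfolding max_matching_def by simp
  qed
  have nn: "\<forall>i\<in>{1..r}. 0 \<le> int (co i) - int (cn i)" using D_nonneg by simp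
  show ?thesis
  proof
    assume w: "path_weight (xrank rank r) M T = 0"
    have all: "\<forall>i\<in>{1..r}. int (co i) - int (cn i) = 0"
      using w weight_sum sum_nonneg_eq_0_iff[of "{1..r}" "\<lambda>i. int (co i) - int (cn i)"] nn by simp
    show "\<forall>i\<in>{1..r+1}. Po (hd T) \<in> Ec i"
    proof
      fix i assume i: "i \<in> {1..r+1}"
      have eq: "cn i = co i"
      proof (cases "i = r + 1")
        case True then show ?thesis using co_top cn_top by simp
      next
        case False then show ?thesis using all i by auto
      qed
      have i1: "1 \<le> i" "i \<le> r + 1" using i by auto
      have c: "cls V (G i) {e \<in> MT. rk e \<le> i}" using clsG[OF i1(1) Kmax[OF i1 eq]] .
      have "\<not> covered {e \<in> MT. rk e \<le> i} (Po (T!0))"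
        using MT_uncov covered_mono[of "{e \<in> MT. rk e \<le> i}" MT] by blast
      then have "Po (T!0) \<in> even_vs V (G i)" using cls.uncov_E[OF c P0] by blast
      then show "Po (hd T) \<in> Ec i" using hdT Ec_eq by simp
    qed
  next
    assume E: "\<forall>i\<in>{1..r+1}. Po (hd T) \<in> Ec i"
    have le: "co i \<le> cn i" if i: "1 \<le> i" "i \<le> r" for i
    proof -
      have i1: "1 \<le> i" "i \<le> r + 1" using i by auto
      have c: "cls V (G i) (Nm i)" using clsG INV[OF i1] i1 by blast
      define K where "K = {e \<in> MT. rk e \<le> i}"
      have mK: "is_matching (G i) K" using K_match[OF i1] by (simp add: K_def)
      have nj: "\<forall>e\<in>K. \<not> joins_OU e (odd_vs V (G i)) (unr_vs V (G i))"
      proof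
        fix e assume "e \<in> K"
        then have "e \<in> RED" "rk e \<le> i" using MT_red by (auto simp: K_def)
        then show "\<not> joins_OU e (odd_vs V (G i)) (unr_vs V (G i))" using red_down[of e i] i1 J_eq by simp
      qed
      have hk: "covered K v" if e: "e \<in> MT" "inc e v" and v: "v \<in> odd_vs V (G i) \<union> unr_vs V (G i)" for e v
      proof -
        have "rk e \<le> i"
        proof (rule ccontr)
          assume "\<not> rk e \<le> i"
          then have "\<not> incident e (OU i)" using red_noinc[of e i] MT_red e(1) i1 by auto
          moreover have "incident e (OU i)" using e(2) v OU_eq incident_iff by blast
          ultimately show False by simp
        qed
        then have "e \<in> K" using e(1) by (simp add: K_def)
        then show ?thesis using e(2) covered_iff by blast
      qed
      have Ei: "Po (T!0) \<in> even_vs V (G i)" using E i1 hdT Ec_eq by auto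
      have cv: "\<forall>v \<in> odd_vs V (G i) \<union> unr_vs V (G i). covered K v"
      proof
        fix v assume v: "v \<in> odd_vs V (G i) \<union> unr_vs V (G i)"
        have "covered (Nm i) v" using cls.cov_OU[OF c v] .
        then obtain f where f: "f \<in> Nm i" "inc f v" using covered_iff by blast
        have fM: "f \<in> M" using f(1) by (simp add: Nm_def)
        show "covered K v"
        proof (cases "f \<in> Old")
          case False
          then have "f \<in> MT" using fM by (simp add: MT_def RR_def)
          then show ?thesis using hk f(2) v by blast
        next
          case True
          then obtain j where j: "j < mm" "f = old j" unfolding Old_def by auto
          then have "v = Ap (aa j) \<or> v = Po (T!j)" using f(2) by (simp add: old_def inc_def)
          then show ?thesis
          proof
            assume va: "v = Ap (aa j)"
            have "new j \<in> MT" using j(1) by (simp add: MT_def New_def)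
            moreover have "inc (new j) v" using va by (simp add: new_def inc_def)
            ultimately show ?thesis using hk v by blast
          next
            assume vp: "v = Po (T!j)"
            show ?thesis
            proof (cases j)
              case 0
              then have "v \<in> even_vs V (G i)" using vp Ei by simp
              then show ?thesis using v cls.EO[OF c] unfolding unr_vs_def by auto
            next
              case (Suc j')
              have "new j' \<in> MT" using j(1) Suc by (simp add: MT_def New_def)
              moreover have "inc (new j') v" using vp Suc by (simp add: new_def inc_def)
              ultimately show ?thesis using hk v by blast
            qed
          qed
        qed
      qed
      have "card (Nm i) \<le> card K" using cls.count_le[OF c mK nj cv] .
      then have "cnt i M \<le> cnt i MT" using cnt_Nm[of i] by (simp add: cnt_def K_def)
      then show ?thesis using cnt_M cnt_MT by simp
    qed
    have "\<forall>i\<in>{1..r}. int (co i) - int (cn i) = 0" using le D_nonneg by fastforce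
    then show "path_weight (xrank rank r) M T = 0" using weight_sum by simp
  qed
qed

end


lemma lemma4_main:
  "(\<forall>p \<in> posts A P. (\<nexists>a. (a, p) \<in> M) \<longrightarrow>
            (\<forall>i \<in> {1..r + 1}. Po p \<in> Ecl A P E rank r i) \<and> is_sink A P E rank r M p)
       \<and> (\<forall>p \<in> posts A P.
            (in_sink_comp A P E rank r M p \<longleftrightarrow> Po p \<in> Ecl A P E rank r (r + 1)) \<and>
            (in_nonsink_comp A P E rank r M p \<longleftrightarrow> Po p \<in> Ucl A P E rank r (r + 1)))
       \<and> (\<forall>T. dpath (posts A P) (reduced A P E rank r) M T \<and> is_sink A P E rank r M (last T) \<longrightarrow>
            (path_weight (xrank rank r) M T = 0 \<longleftrightarrow>
               (\<forall>i \<in> {1..r + 1}. Po (hd T) \<in> Ecl A P E rank r i)))"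
  using part1 part2a part2b part3 by blast

end

theorem lemma4:
  fixes A :: "'a set" and P :: "'p set" and E :: "('a \<times> 'p) set"
    and rank :: "'a \<Rightarrow> 'p \<Rightarrow> nat" and r :: nat
    and M :: "('a \<times> ('p + 'a)) set"
  assumes inst: "rm_instance A P E rank r"
    and rm: "rank_maximal A E rank r M"
  shows "(\<forall>p \<in> posts A P. (\<nexists>a. (a, p) \<in> M) \<longrightarrow>
            (\<forall>i \<in> {1..r + 1}. Po p \<in> Ecl A P E rank r i) \<and> is_sink A P E rank r M p)
       \<and> (\<forall>p \<in> posts A P.
            (in_sink_comp A P E rank r M p \<longleftrightarrow> Po p \<in> Ecl A P E rank r (r + 1)) \<and>
            (in_nonsink_comp A P E rank r M p \<longleftrightarrow> Po p \<in> Ucl A P E rank r (r + 1)))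
       \<and> (\<forall>T. dpath (posts A P) (reduced A P E rank r) M T \<and> is_sink A P E rank r M (last T) \<longrightarrow>
            (path_weight (xrank rank r) M T = 0 \<longleftrightarrow>
               (\<forall>i \<in> {1..r + 1}. Po (hd T) \<in> Ecl A P E rank r i)))"
proof -
  interpret rmi A P E rank r M using inst rm by (rule rmi.intro)
  show ?thesis by (rule lemma4_main)
qed

end
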